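(* Let $q$ be odd, let $\mathcal{K}$ be an arc in $\mathbb{P}^2(\mathbb{F}_q)$ and $\mathcal{C}_1$ an irreducible envelope of $\mathcal{K}$ of degree $d$. Let $Q\in\mathcal{K}$ and let $\mathcal{A}_Q$ be the set of points of $\mathcal{C}_1$ corresponding to unisecants of $\mathcal{K}$ passing through $Q$. Let $u=\#\mathcal{A}_Q$ and let $v$ be the number of points of $\mathcal{A}_Q$ which are non-singular inflexion points of $\mathcal{C}_1$. Then $2(u-v)+v\ge d$.
   Context: A $k$-arc is a set of $k$ points of $\mathbb{P}^2(\mathbb{F}_q)$ no three collinear. Unisecants (resp. 2-secants) of $\mathcal{K}$: lines of $\mathbb{P}^2(\mathbb{F}_q)$ meeting $\mathcal{K}$ in one (resp. two) points. Lines are points of the dual plane; $\ell_P$ is the dual line of lines through $P$; $t=q-k+2$. (Segre) For $q$ odd an envelope $\mathcal{C}$ of $\mathcal{K}$ is a plane curve of the dual plane, defined over $\mathbb{F}_q$, of degree $2t$, containing all $kt$ unisecants, with $I(\ell,\mathcal{C}\cap\ell_P)=2$ for each unisecant $\ell$ through $P\in\mathcal{K}$, containing no 2-secant, with components of multiplicity at most $2$ and at least one of multiplicity $1$. A non-singular point $P$ of a plane curve $\mathcal{A}$ is an inflexion point if $I(P,\mathcal{A}\cap\ell)>2$ for the tangent $\ell$ at $P$. A special point of $\mathcal{C}$ is a non-singular, $\mathbb{F}_q$-rational, non-inflexion point; the unique irreducible component of $\mathcal{C}$ through a special point is the irreducible envelope associated to it; an irreducible envelope of $\mathcal{K}$ is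 one associated to some special point. *)

theory Defs
  imports "HOL-Computational_Algebra.Computational_Algebra" "HOL-Library.Extended_Nat"
begin

text \<open>Homogeneous coordinates: triples. Trivariate polynomials over k are nested
  univariate polynomials: outer variable X, middle Y, inner Z.\<close>

type_synonym 'k pt = "'k \<times> 'k \<times> 'k"
type_synonym 'k poly3 = "'k poly poly poly"

definition pclass :: "'k::field pt \<Rightarrow> 'k pt set" where
  "pclass v = {(c * fst v, c * fst (snd v), c * snd (snd v)) | c. c \<noteq> 0}"

text \<open>Points of the projective plane P^2(k) (and, identically, of the dual plane).\<close>
definition P2 :: "'k::field pt set set" where
  "P2 = {pclass v | v. v \<noteq> (0,0,0)}"

definition rep :: "'k::field pt set \<Rightarrow> 'k pt" where
  "rep P = (SOME v. v \<in> P)"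

definition rational :: "'k::field set \<Rightarrow> 'k pt set \<Rightarrow> bool" where
  "rational Fq P \<longleftrightarrow> P \<in> P2 \<and> (\<exists>a b c. (a,b,c) \<in> P \<and> a \<in> Fq \<and> b \<in> Fq \<and> c \<in> Fq)"

definition dot :: "'k::field pt \<Rightarrow> 'k pt \<Rightarrow> 'k" where
  "dot v w = fst v * fst w + fst (snd v) * fst (snd w) + snd (snd v) * snd (snd w)"

definition inc :: "'k::field pt set \<Rightarrow> 'k pt set \<Rightarrow> bool" where
  "inc P L \<longleftrightarrow> dot (rep P) (rep L) = 0"

definition det3 :: "'k::field pt \<Rightarrow> 'k pt \<Rightarrow> 'k pt \<Rightarrow> 'k" where
  "det3 u v w = (case u of (a1,a2,a3) \<Rightarrow> case v of (b1,b2,b3) \<Rightarrow> case w of (c1,c2,c3) \<Rightarrow>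
     a1*(b2*c3 - b3*c2) - a2*(b1*c3 - b3*c1) + a3*(b1*c2 - b2*c1))"

definition collinear3 :: "'k::field pt set \<Rightarrow> 'k pt set \<Rightarrow> 'k pt set \<Rightarrow> bool" where
  "collinear3 P Q R \<longleftrightarrow> det3 (rep P) (rep Q) (rep R) = 0"

definition arc :: "'k::field set \<Rightarrow> 'k pt set set \<Rightarrow> bool" where
  "arc Fq K \<longleftrightarrow> finite K \<and> (\<forall>P\<in>K. rational Fq P) \<and>
     (\<forall>P\<in>K. \<forall>Q\<in>K. \<forall>R\<in>K. P \<noteq> Q \<and> P \<noteq> R \<and> Q \<noteq> R \<longrightarrow> \<not> collinear3 P Q R)"

definition unisecant :: "'k::field set \<Rightarrow> 'k pt set set \<Rightarrow> 'k pt set \<Rightarrow> bool" where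
  "unisecant Fq K L \<longleftrightarrow> rational Fq L \<and> card {P\<in>K. inc P L} = 1"

definition two_secant :: "'k::field set \<Rightarrow> 'k pt set set \<Rightarrow> 'k pt set \<Rightarrow> bool" where
  "two_secant Fq K L \<longleftrightarrow> rational Fq L \<and> card {P\<in>K. inc P L} = 2"

definition eval3 :: "'a::comm_semiring_1 poly3 \<Rightarrow> 'a \<Rightarrow> 'a \<Rightarrow> 'a \<Rightarrow> 'a" where
  "eval3 F x y z = poly (map_poly (\<lambda>G. poly (map_poly (\<lambda>h. poly h z) G) y) F) x"

definition evalp :: "'k::field poly3 \<Rightarrow> 'k pt \<Rightarrow> 'k" where
  "evalp F v = eval3 F (fst v) (fst (snd v)) (snd (snd v))"

definition coeff3 :: "'a::zero poly3 \<Rightarrow> nat \<Rightarrow> nat \<Rightarrow> nat \<Rightarrow> 'a" where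
  "coeff3 F i j l = coeff (coeff (coeff F i) j) l"

definition homogeneous :: "'a::zero poly3 \<Rightarrow> nat \<Rightarrow> bool" where
  "homogeneous F n \<longleftrightarrow> F \<noteq> 0 \<and> (\<forall>i j l. coeff3 F i j l \<noteq> 0 \<longrightarrow> i + j + l = n)"

definition curve_deg :: "'a::zero poly3 \<Rightarrow> nat" where
  "curve_deg F = (THE n. homogeneous F n)"

definition on_curve :: "'k::field poly3 \<Rightarrow> 'k pt set \<Rightarrow> bool" where
  "on_curve F P \<longleftrightarrow> P \<in> P2 \<and> evalp F (rep P) = 0"

definition dX :: "'k::field poly3 \<Rightarrow> 'k poly3" where "dX F = pderiv F"
definition dY :: "'k::field poly3 \<Rightarrow> 'k poly3" where "dY F = map_poly pderiv F"
definition dZ :: "'k::field poly3 \<Rightarrow> 'k poly3" where "dZ F = map_poly (map_poly pderiv) F"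

definition gradient :: "'k::field poly3 \<Rightarrow> 'k pt \<Rightarrow> 'k pt" where
  "gradient F v = (evalp (dX F) v, evalp (dY F) v, evalp (dZ F) v)"

definition nonsingular :: "'k::field poly3 \<Rightarrow> 'k pt set \<Rightarrow> bool" where
  "nonsingular F P \<longleftrightarrow> on_curve F P \<and> gradient F (rep P) \<noteq> (0,0,0)"

definition tangent :: "'k::field poly3 \<Rightarrow> 'k pt set \<Rightarrow> 'k pt set" where
  "tangent F P = pclass (gradient F (rep P))"

text \<open>Restriction of F to the parametrised line t \<mapsto> v + t w.\<close>
definition restr :: "'k::field poly3 \<Rightarrow> 'k pt \<Rightarrow> 'k pt \<Rightarrow> 'k poly" where
  "restr F v w = eval3 (map_poly (map_poly (map_poly (\<lambda>c. [:c:]))) F)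
      [:fst v, fst w:] [:fst (snd v), fst (snd w):] [:snd (snd v), snd (snd w):]"

text \<open>Intersection multiplicity I(P, A \<inter> L) of the curve F with a line L through P:
  order at t = 0 of F restricted to a parametrisation P + tR of L (R another point of L);
  infinite if L is contained in the curve.\<close>
definition imult :: "'k::field poly3 \<Rightarrow> 'k pt set \<Rightarrow> 'k pt set \<Rightarrow> enat" where
  "imult F P L = (let R = (SOME R. R \<in> P2 \<and> R \<noteq> P \<and> inc R L);
                     r = restr F (rep P) (rep R)
                  in if r = 0 then \<infinity> else enat (order 0 r))"

definition inflexion :: "'k::field poly3 \<Rightarrow> 'k pt set \<Rightarrow> bool" where
  "inflexion F P \<longleftrightarrow> nonsingular F P \<and> imult F P (tangent F P) > 2"

definition coeffs_in :: "'k::field set \<Rightarrow> 'k poly3 \<Rightarrow> bool" where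
  "coeffs_in Fq F \<longleftrightarrow> (\<forall>i j l. coeff3 F i j l \<in> Fq)"

text \<open>A line through P
  is a point of the dual plane; the pencil \<ell>_P of lines through P is the dual line with
  the same coordinates as P, hence is represented by P itself.\<close>
definition envelope :: "'k::field_gcd set \<Rightarrow> 'k pt set set \<Rightarrow> 'k poly3 \<Rightarrow> bool" where
  "envelope Fq K C \<longleftrightarrow>
     coeffs_in Fq C \<and>
     int (curve_deg C) = 2 * (int (card Fq) - int (card K) + 2) \<and>
     homogeneous C (curve_deg C) \<and>
     (\<forall>L. unisecant Fq K L \<longrightarrow> on_curve C L) \<and>
     (\<forall>P\<in>K. \<forall>L. unisecant Fq K L \<and> inc P L \<longrightarrow> imult C L P = 2) \<and>
     (\<forall>L. two_secant Fq K L \<longrightarrow> \<not> on_curve C L) \<and>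
     (\<forall>G. irreducible G \<and> G dvd C \<longrightarrow> multiplicity G C \<le> 2) \<and>
     (\<exists>G. irreducible G \<and> G dvd C \<and> multiplicity G C = 1)"

definition special_point :: "'k::field set \<Rightarrow> 'k poly3 \<Rightarrow> 'k pt set \<Rightarrow> bool" where
  "special_point Fq C P \<longleftrightarrow> nonsingular C P \<and> rational Fq P \<and> \<not> inflexion C P"

text \<open>C1 is an irreducible envelope of K: the unique irreducible component (factor)
  of some envelope C through a special point of C.\<close>
definition irreducible_envelope :: "'k::field_gcd set \<Rightarrow> 'k pt set set \<Rightarrow> 'k poly3 \<Rightarrow> bool" where
  "irreducible_envelope Fq K C1 \<longleftrightarrow>
     (\<exists>C P. envelope Fq K C \<and> special_point Fq C P \<and>
        irreducible C1 \<and> C1 dvd C \<and> on_curve C1 P \<and>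
        (\<forall>G. irreducible G \<and> G dvd C \<and> on_curve G P \<longrightarrow> G dvd C1 \<and> C1 dvd G))"

definition alg_closed :: "'k::field itself \<Rightarrow> bool" where
  "alg_closed _ \<longleftrightarrow> (\<forall>p::'k poly. degree p > 0 \<longrightarrow> (\<exists>x. poly p x = 0))"

definition subfield :: "'k::field set \<Rightarrow> bool" where
  "subfield S \<longleftrightarrow> 0 \<in> S \<and> 1 \<in> S \<and> (\<forall>a\<in>S. \<forall>b\<in>S. a + b \<in> S \<and> a * b \<in> S \<and> - a \<in> S) \<and>
     (\<forall>a\<in>S. a \<noteq> 0 \<longrightarrow> inverse a \<in> S)"

end

theory Submission
  imports Defs
begin


definition rh :: "('a::comm_semiring_1 \<Rightarrow> 'b::comm_semiring_1) \<Rightarrow> bool" where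
  "rh f \<longleftrightarrow> f 0 = 0 \<and> (\<forall>a b. f (a + b) = f a + f b) \<and> (\<forall>a b. f (a * b) = f a * f b)"

lemma rhD: assumes "rh f" shows "f 0 = 0" "f (a + b) = f a + f b" "f (a * b) = f a * f b"
  using assms by (auto simp: rh_def)

lemma map_poly_add_rh:
  assumes "rh f" shows "map_poly f (p + q) = map_poly f p + map_poly f q"
  by (intro poly_eqI) (simp add: coeff_map_poly rhD[OF assms])

lemma map_poly_smult_rh:
  assumes "rh f" shows "map_poly f (smult a q) = smult (f a) (map_poly f q)"
  by (intro poly_eqI) (simp add: coeff_map_poly rhD[OF assms])

lemma map_poly_mult_rh:
  assumes "rh f" shows "map_poly f (p * q) = map_poly f p * map_poly f q"
proof (induction p)
  case 0 show ?case by simp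
next
  case (pCons a p)
  have "map_poly f (pCons a p * q) = map_poly f (smult a q + pCons 0 (p * q))" by simp
  also have "\<dots> = map_poly f (smult a q) + map_poly f (pCons 0 (p*q))"
    by (rule map_poly_add_rh[OF assms])
  also have "map_poly f (pCons 0 (p*q)) = pCons 0 (map_poly f p * map_poly f q)"
    using pCons.IH by (simp add: map_poly_pCons rhD[OF assms])
  finally show ?case using assms by (simp add: map_poly_pCons map_poly_smult_rh rhD[OF assms])
qed

lemma rh_map_poly: "rh f \<Longrightarrow> rh (map_poly f)"
  unfolding rh_def[of "map_poly f"] using map_poly_add_rh map_poly_mult_rh by auto

lemma poly_hom_rh:
  assumes "rh f" shows "f (poly p x) = poly (map_poly f p) (f x)"
  by (induction p) (simp_all add: map_poly_pCons rhD[OF assms])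

lemma rh_poly: "rh (\<lambda>p. poly p x)"
  by (simp add: rh_def)

lemma rh_const: "rh (\<lambda>c. [:c:])"
  by (simp add: rh_def mult.commute)

lemma rh_comp: "rh f \<Longrightarrow> rh g \<Longrightarrow> rh (\<lambda>x. f (g x))"
  by (simp add: rh_def)

lemma rh_polymap: "rh f \<Longrightarrow> rh (\<lambda>G. poly (map_poly f G) y)"
  unfolding rh_def by (simp add: map_poly_add_rh map_poly_mult_rh rh_def)

definition map3 :: "('a::zero \<Rightarrow> 'b::zero) \<Rightarrow> 'a poly3 \<Rightarrow> 'b poly3" where
  "map3 h F = map_poly (map_poly (map_poly h)) F"

lemma rh_map3: "rh h \<Longrightarrow> rh (map3 h)"
  unfolding map3_def by (intro rh_map_poly)

lemma eval3_alt: "eval3 F x y z = poly (map_poly (\<lambda>G. poly (map_poly (\<lambda>h. poly h z) G) y) F) x"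
  by (simp add: eval3_def)

lemma rh_eval3_inner: "rh (\<lambda>G. poly (map_poly (\<lambda>h. poly h z) G) y)"
  by (intro rh_polymap rh_poly)

lemma eval3_mult: "eval3 (F * G) x y z = eval3 F x y z * eval3 G x y z"
  unfolding eval3_def by (simp add: map_poly_mult_rh[OF rh_eval3_inner])

lemma eval3_add: "eval3 (F + G) x y z = eval3 F x y z + eval3 G x y z"
  unfolding eval3_def by (simp add: map_poly_add_rh[OF rh_eval3_inner])

lemma eval3_hom:
  assumes h: "rh h"
  shows "h (eval3 F x y z) = eval3 (map3 h F) (h x) (h y) (h z)"
proof -
  have 0: "rh (\<lambda>G. poly (map_poly (\<lambda>h. poly h z) G) y)" by (rule rh_eval3_inner)
  have "h (eval3 F x y z) = poly (map_poly h (map_poly (\<lambda>G. poly (map_poly (\<lambda>h. poly h z) G) y) F)) (h x)"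
    unfolding eval3_def by (rule poly_hom_rh[OF h])
  also have "map_poly h (map_poly (\<lambda>G. poly (map_poly (\<lambda>h. poly h z) G) y) F)
      = map_poly (\<lambda>G. poly (map_poly (\<lambda>g. poly g (h z)) G) (h y)) (map_poly (map_poly (map_poly h)) F)"
  proof -
    have "map_poly h (map_poly (\<lambda>G. poly (map_poly (\<lambda>h. poly h z) G) y) F)
       = map_poly (h \<circ> (\<lambda>G. poly (map_poly (\<lambda>h. poly h z) G) y)) F"
      by (rule map_poly_map_poly) (simp_all add: rhD[OF h] rhD[OF 0])
    also have "\<dots> = map_poly ((\<lambda>G. poly (map_poly (\<lambda>g. poly g (h z)) G) (h y)) \<circ> map_poly (map_poly h)) F"
    proof (rule map_poly_cong)
      fix G :: "'a poly poly"
      have "h (poly (map_poly (\<lambda>h. poly h z) G) y) = poly (map_poly h (map_poly (\<lambda>h. poly h z) G)) (h y)"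
        by (rule poly_hom_rh[OF h])
      also have "map_poly h (map_poly (\<lambda>h. poly h z) G) = map_poly (\<lambda>g. poly g (h z)) (map_poly (map_poly h) G)"
      proof -
        have "map_poly h (map_poly (\<lambda>h. poly h z) G) = map_poly (h \<circ> (\<lambda>h. poly h z)) G"
          by (rule map_poly_map_poly) (simp_all add: rhD[OF h])
        also have "\<dots> = map_poly ((\<lambda>g. poly g (h z)) \<circ> map_poly h) G"
          by (rule map_poly_cong) (simp add: poly_hom_rh[OF h])
        also have "\<dots> = map_poly (\<lambda>g. poly g (h z)) (map_poly (map_poly h) G)"
          by (rule map_poly_map_poly[symmetric]) simp_all
        finally show ?thesis .
      qed
      finally show "(h \<circ> (\<lambda>G. poly (map_poly (\<lambda>h. poly h z) G) y)) G =
          ((\<lambda>G. poly (map_poly (\<lambda>g. poly g (h z)) G) (h y)) \<circ> map_poly (map_poly h)) G" by simp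
    qed
    also have "\<dots> = map_poly (\<lambda>G. poly (map_poly (\<lambda>g. poly g (h z)) G) (h y)) (map_poly (map_poly (map_poly h)) F)"
      by (rule map_poly_map_poly[symmetric]) simp_all
    finally show ?thesis .
  qed
  finally show ?thesis unfolding eval3_def map3_def .
qed

lemma map3_map3: "h 0 = 0 \<Longrightarrow> g 0 = 0 \<Longrightarrow> map3 h (map3 g F) = map3 (\<lambda>x. h (g x)) F"
  unfolding map3_def
  by (subst map_poly_map_poly; simp add: map_poly_map_poly o_def)+

lemma coeff3_map3: "h 0 = 0 \<Longrightarrow> coeff3 (map3 h F) i j l = h (coeff3 F i j l)"
  unfolding map3_def coeff3_def by (simp add: coeff_map_poly)



definition bnd :: "'a::zero poly3 \<Rightarrow> nat \<Rightarrow> bool" where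
  "bnd F B \<longleftrightarrow> (\<forall>i j l. coeff3 F i j l \<noteq> 0 \<longrightarrow> i < B \<and> j < B \<and> l < B)"

lemma bnd_mono: "bnd F B \<Longrightarrow> B \<le> B' \<Longrightarrow> bnd F B'"
  unfolding bnd_def by force

lemma poly_nz_coeff: "p \<noteq> 0 \<Longrightarrow> \<exists>n. coeff p n \<noteq> 0"
  using leading_coeff_neq_0 by blast

lemma bnd_coeff1: "bnd F B \<Longrightarrow> B \<le> i \<Longrightarrow> coeff F i = 0"
  unfolding bnd_def coeff3_def by (metis leD poly_nz_coeff)

lemma bnd_coeff2: "bnd F B \<Longrightarrow> B \<le> j \<Longrightarrow> coeff (coeff F i) j = 0"
  unfolding bnd_def coeff3_def by (metis leD poly_nz_coeff)

lemma bnd_coeff3: "bnd F B \<Longrightarrow> B \<le> l \<Longrightarrow> coeff3 F i j l = 0"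
  unfolding bnd_def by (metis leD)

lemma poly_sum_lt:
  fixes p :: "'a::comm_semiring_1 poly"
  assumes "\<And>i. B \<le> i \<Longrightarrow> coeff p i = 0"
  shows "poly p x = (\<Sum>i<B. coeff p i * x ^ i)"
proof (cases "p = 0")
  case True then show ?thesis by simp
next
  case False
  then have "coeff p (degree p) \<noteq> 0" by simp
  then have dB: "degree p < B" using assms by (meson not_le)
  have "(\<Sum>i<B. coeff p i * x ^ i) = (\<Sum>i\<le>degree p. coeff p i * x ^ i)"
    by (rule sum.mono_neutral_right) (use dB in \<open>auto simp: coeff_eq_0\<close>)
  then show ?thesis by (simp add: poly_altdef)
qed

lemma EV:
  assumes "bnd F B"
  shows "eval3 F x y z = (\<Sum>i<B. \<Sum>j<B. \<Sum>l<B. coeff3 F i j l * x ^ i * y ^ j * z ^ l)"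
proof -
  let ?psi = "\<lambda>h. poly h z"
  let ?phi = "\<lambda>G. poly (map_poly ?psi G) y"
  have psi: "?psi g = (\<Sum>l<B. coeff g l * z ^ l)" if "\<And>l. B \<le> l \<Longrightarrow> coeff g l = 0" for g
    by (rule poly_sum_lt) (use that in auto)
  have phi: "?phi G = (\<Sum>j<B. ?psi (coeff G j) * y ^ j)" if "\<And>j. B \<le> j \<Longrightarrow> coeff G j = 0" for G
    by (subst poly_sum_lt[where B=B]) (use that in \<open>auto simp: coeff_map_poly\<close>)
  have "eval3 F x y z = (\<Sum>i<B. ?phi (coeff F i) * x ^ i)"
    unfolding eval3_def
    by (subst poly_sum_lt[where B=B]) (use bnd_coeff1[OF assms] in \<open>auto simp: coeff_map_poly\<close>)
  also have "\<dots> = (\<Sum>i<B. (\<Sum>j<B. (\<Sum>l<B. coeff3 F i j l * z ^ l) * y ^ j) * x ^ i)"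
  proof (rule sum.cong[OF refl])
    fix i
    have "?phi (coeff F i) = (\<Sum>j<B. ?psi (coeff (coeff F i) j) * y ^ j)"
      by (rule phi) (rule bnd_coeff2[OF assms])
    also have "\<dots> = (\<Sum>j<B. (\<Sum>l<B. coeff3 F i j l * z ^ l) * y ^ j)"
      by (rule sum.cong[OF refl], subst psi) (use bnd_coeff3[OF assms] in \<open>auto simp: coeff3_def\<close>)
    finally show "?phi (coeff F i) * x ^ i = (\<Sum>j<B. (\<Sum>l<B. coeff3 F i j l * z ^ l) * y ^ j) * x ^ i" by simp
  qed
  also have "\<dots> = (\<Sum>i<B. \<Sum>j<B. \<Sum>l<B. coeff3 F i j l * x ^ i * y ^ j * z ^ l)"
    by (simp add: sum_distrib_right sum_distrib_left mult_ac)
  finally show ?thesis .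
qed

lemma bnd_ex: "\<exists>B. bnd F B"
proof -
  define D1 where "D1 = degree F"
  define D2 where "D2 = (\<Sum>i\<le>D1. degree (coeff F i))"
  define D3 where "D3 = (\<Sum>i\<le>D1. \<Sum>j\<le>degree (coeff F i). degree (coeff (coeff F i) j))"
  have "bnd F (Suc (D1 + D2 + D3))"
    unfolding bnd_def
  proof (intro allI impI)
    fix i j l assume nz: "coeff3 F i j l \<noteq> 0"
    then have c1: "coeff F i \<noteq> 0" and c2: "coeff (coeff F i) j \<noteq> 0" by (auto simp: coeff3_def)
    have i: "i \<le> D1" unfolding D1_def using c1 le_degree by blast
    have j: "j \<le> degree (coeff F i)" using c2 le_degree by blast
    have l: "l \<le> degree (coeff (coeff F i) j)" using nz le_degree unfolding coeff3_def by blast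
    have "degree (coeff F i) \<le> D2" unfolding D2_def
      by (rule member_le_sum) (use i in auto)
    moreover have "degree (coeff (coeff F i) j) \<le> (\<Sum>j\<le>degree (coeff F i). degree (coeff (coeff F i) j))"
      by (rule member_le_sum) (use j in auto)
    moreover have "(\<Sum>j\<le>degree (coeff F i). degree (coeff (coeff F i) j)) \<le> D3" unfolding D3_def
      by (rule member_le_sum[where f="\<lambda>i. \<Sum>j\<le>degree (coeff F i). degree (coeff (coeff F i) j)"]) (use i in auto)
    ultimately show "i < Suc (D1 + D2 + D3) \<and> j < Suc (D1 + D2 + D3) \<and> l < Suc (D1 + D2 + D3)"
      using i j l by linarith
  qed
  then show ?thesis by blast
qed

definition vsc :: "'k::comm_ring_1 \<Rightarrow> 'k pt \<Rightarrow> 'k pt" where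
  "vsc c u = (c * fst u, c * fst (snd u), c * snd (snd u))"
definition vadd :: "'k::comm_ring_1 pt \<Rightarrow> 'k pt \<Rightarrow> 'k pt" where
  "vadd u v = (fst u + fst v, fst (snd u) + fst (snd v), snd (snd u) + snd (snd v))"

lemma map_poly_ident: "map_poly (\<lambda>x. x) = (\<lambda>p. p)"
  by (rule ext) simp

lemma restr_alt: "restr F v w = eval3 (map3 (\<lambda>c. [:c:]) F)
      [:fst v, fst w:] [:fst (snd v), fst (snd w):] [:snd (snd v), snd (snd w):]"
  by (simp add: restr_def map3_def)

lemma E1: "poly (restr F v w) s = evalp F (vadd v (vsc s w))"
proof -
  have "poly (restr F v w) s = eval3 (map3 (\<lambda>p. poly p s) (map3 (\<lambda>c. [:c:]) F))
       (poly [:fst v, fst w:] s) (poly [:fst (snd v), fst (snd w):] s) (poly [:snd (snd v), snd (snd w):] s)"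
    unfolding restr_alt by (rule eval3_hom[OF rh_poly])
  also have "map3 (\<lambda>p. poly p s) (map3 (\<lambda>c. [:c:]) F) = F"
    by (subst map3_map3) (simp_all add: map3_def map_poly_ident)
  finally show ?thesis by (simp add: evalp_def vadd_def vsc_def mult.commute)
qed

lemma homogeneousD: "homogeneous F n \<Longrightarrow> coeff3 F i j l \<noteq> 0 \<Longrightarrow> i + j + l = n"
  by (simp add: homogeneous_def)

lemma E2:
  assumes "homogeneous F n"
  shows "evalp F (vsc c u) = c ^ n * evalp F u"
proof -
  obtain B where B: "bnd F B" using bnd_ex by blast
  have T: "coeff3 F i j l * (c * fst u) ^ i * (c * fst (snd u)) ^ j * (c * snd (snd u)) ^ l =
          c ^ n * (coeff3 F i j l * fst u ^ i * fst (snd u) ^ j * snd (snd u) ^ l)" for i j l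
  proof -
    show "coeff3 F i j l * (c * fst u) ^ i * (c * fst (snd u)) ^ j * (c * snd (snd u)) ^ l =
          c ^ n * (coeff3 F i j l * fst u ^ i * fst (snd u) ^ j * snd (snd u) ^ l)"
    proof (cases "coeff3 F i j l = 0")
      case True then show ?thesis by simp
    next
      case False
      then have "n = i + j + l" using homogeneousD[OF assms] by simp
      then show ?thesis by (simp add: power_mult_distrib power_add mult_ac)
    qed
  qed
  show ?thesis
    unfolding evalp_def EV[OF B] vsc_def sum_distrib_left by (simp add: T)
qed

lemma bnd_map3: "bnd F B \<Longrightarrow> h 0 = 0 \<Longrightarrow> bnd (map3 h F) B"
  unfolding bnd_def by (metis coeff3_map3)

lemma DEG:
  assumes "homogeneous F n"
  shows "degree (restr F v w) \<le> n"
proof -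
  obtain B where B: "bnd F B" using bnd_ex by blast
  have B': "bnd (map3 (\<lambda>c. [:c:]) F) B" by (rule bnd_map3[OF B]) simp
  let ?X = "[:fst v, fst w:]" and ?Y = "[:fst (snd v), fst (snd w):]" and ?Z = "[:snd (snd v), snd (snd w):]"
  have dX: "degree ?X \<le> 1" "degree ?Y \<le> 1" "degree ?Z \<le> 1" by auto
  have trm: "degree ([:coeff3 F i j l:] * ?X ^ i * ?Y ^ j * ?Z ^ l) \<le> n" for i j l
  proof (cases "coeff3 F i j l = 0")
    case True then show ?thesis by simp
  next
    case False
    then have n: "n = i + j + l" using homogeneousD[OF assms] by simp
    have "degree ([:coeff3 F i j l:] * ?X ^ i * ?Y ^ j * ?Z ^ l) \<le>
        degree ([:coeff3 F i j l:] * ?X ^ i * ?Y ^ j) + degree (?Z ^ l)" by (rule degree_mult_le)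
    also have "\<dots> \<le> degree ([:coeff3 F i j l:] * ?X ^ i) + degree (?Y ^ j) + degree (?Z ^ l)"
      using degree_mult_le by (metis add_le_mono1)
    also have "\<dots> \<le> degree [:coeff3 F i j l:] + degree (?X ^ i) + degree (?Y ^ j) + degree (?Z ^ l)"
      using degree_mult_le by (metis add_le_mono1)
    also have "\<dots> \<le> 0 + i + j + l"
    proof -
      have "degree (?X ^ i) \<le> i" using degree_power_le[of ?X i] dX(1) by (metis mult.commute mult_le_mono2 mult.right_neutral order_trans)
      moreover have "degree (?Y ^ j) \<le> j" using degree_power_le[of ?Y j] dX(2) by (metis mult.commute mult_le_mono2 mult.right_neutral order_trans)
      moreover have "degree (?Z ^ l) \<le> l" using degree_power_le[of ?Z l] dX(3) by (metis mult.commute mult_le_mono2 mult.right_neutral order_trans)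
      ultimately show ?thesis by simp
    qed
    finally show ?thesis using n by simp
  qed
  show ?thesis
    unfolding restr_alt EV[OF B']
    by (intro degree_sum_le finite_lessThan) (use trm in \<open>simp add: coeff3_map3\<close>)
qed

lemma c1_mult: "coeff (p * q) 1 = coeff p 0 * coeff q 1 + coeff p 1 * coeff (q::'a::comm_semiring_1 poly) 0"
  by (simp add: coeff_mult atMost_Suc add.commute)

lemma c1_lin_power: "coeff ([:a, b:] ^ i) 1 = of_nat i * a ^ (i - 1) * (b::'a::comm_semiring_1)"
proof (induction i)
  case 0 then show ?case by simp
next
  case (Suc i)
  have "coeff ([:a, b:] ^ Suc i) 1 = a * coeff ([:a, b:] ^ i) 1 + b * a ^ i"
    by (simp add: c1_mult coeff_0_power del: power_Suc) (simp add: mult_ac coeff_0_power)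
  also have "\<dots> = of_nat (Suc i) * a ^ i * b"
    using Suc by (cases i) (simp_all add: algebra_simps)
  finally show ?case by simp
qed

lemma sum_shift0: "h 0 = 0 \<Longrightarrow> h B = 0 \<Longrightarrow> (\<Sum>i<B. h (Suc i)) = (\<Sum>i<B. h i)"
  by (metis add.commute add.right_neutral sum.lessThan_Suc sum.lessThan_Suc_shift add_0)

lemma coeff_of_nat_mult: "coeff (of_nat n * p) j = of_nat n * coeff (p::'a::comm_semiring_1 poly) j"
  by (simp add: of_nat_poly)

lemma coeff3_dX: "coeff3 (dX F) i j l = of_nat (Suc i) * coeff3 F (Suc i) j l"
  by (simp add: dX_def coeff3_def coeff_pderiv coeff_of_nat_mult del: of_nat_Suc)
lemma coeff3_dY: "coeff3 (dY F) i j l = of_nat (Suc j) * coeff3 F i (Suc j) l"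
  by (simp add: dY_def coeff3_def coeff_pderiv coeff_of_nat_mult coeff_map_poly del: of_nat_Suc)
lemma coeff3_dZ: "coeff3 (dZ F) i j l = of_nat (Suc l) * coeff3 F i j (Suc l)"
  by (simp add: dZ_def coeff3_def coeff_pderiv coeff_map_poly)

lemma bnd_dX: "bnd F B \<Longrightarrow> bnd (dX F) B"
  unfolding bnd_def coeff3_dX by (metis Suc_lessD mult_zero_right)
lemma bnd_dY: "bnd F B \<Longrightarrow> bnd (dY F) B"
  unfolding bnd_def coeff3_dY by (metis Suc_lessD mult_zero_right)
lemma bnd_dZ: "bnd F B \<Longrightarrow> bnd (dZ F) B"
  unfolding bnd_def coeff3_dZ by (metis Suc_lessD mult_zero_right)



lemma bnd_zero_i: "bnd F B \<Longrightarrow> coeff3 F B j l = 0"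
  unfolding bnd_def by blast
lemma bnd_zero_j: "bnd F B \<Longrightarrow> coeff3 F i B l = 0"
  unfolding bnd_def by blast
lemma bnd_zero_l: "bnd F B \<Longrightarrow> coeff3 F i j B = 0"
  unfolding bnd_def by blast

lemma coeff3_map3_const: "coeff3 (map3 (\<lambda>c. [:c:]) F) i j l = [:coeff3 F i j l:]"
  by (simp add: coeff3_map3)

lemma GRAD: "coeff (restr F v w) 1 = dot (gradient F v) w"
proof -
  obtain B where B: "bnd F B" using bnd_ex by blast
  have B': "bnd (map3 (\<lambda>c. [:c:]) F) B" by (rule bnd_map3[OF B]) simp
  obtain v1 v2 v3 where v: "v = (v1, v2, v3)" by (cases v) auto
  obtain w1 w2 w3 where w: "w = (w1, w2, w3)" by (cases w) auto
  define c where "c = coeff3 F"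
  have t1: "coeff ([:c i j l:] * [:v1, w1:] ^ i * [:v2, w2:] ^ j * [:v3, w3:] ^ l) 1 =
      c i j l * (of_nat i * v1 ^ (i - 1) * w1 * v2 ^ j * v3 ^ l)
    + c i j l * (of_nat j * v1 ^ i * v2 ^ (j - 1) * w2 * v3 ^ l)
    + c i j l * (of_nat l * v1 ^ i * v2 ^ j * v3 ^ (l - 1) * w3)" for i j l
    apply (simp only: mult.assoc c1_mult coeff_mult_0 coeff_0_power c1_lin_power)
    apply (simp add: algebra_simps)
    done
  have L: "coeff (restr F v w) 1 = (\<Sum>i<B. \<Sum>j<B. \<Sum>l<B.
      c i j l * (of_nat i * v1 ^ (i - 1) * w1 * v2 ^ j * v3 ^ l)
    + c i j l * (of_nat j * v1 ^ i * v2 ^ (j - 1) * w2 * v3 ^ l)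
    + c i j l * (of_nat l * v1 ^ i * v2 ^ j * v3 ^ (l - 1) * w3))"
    unfolding restr_alt EV[OF B'] coeff_sum coeff3_map3_const v w fst_conv snd_conv t1[unfolded c_def] c_def ..
  have GX: "evalp (dX F) v = (\<Sum>i<B. \<Sum>j<B. \<Sum>l<B. of_nat i * c i j l * v1 ^ (i - 1) * v2 ^ j * v3 ^ l)"
  proof -
    have "evalp (dX F) v = (\<Sum>i<B. (\<lambda>i. \<Sum>j<B. \<Sum>l<B. of_nat i * c i j l * v1 ^ (i - 1) * v2 ^ j * v3 ^ l) (Suc i))"
      unfolding evalp_def EV[OF bnd_dX[OF B]] coeff3_dX by (simp add: v c_def mult.assoc del: of_nat_Suc)
    also have "\<dots> = (\<Sum>i<B. \<Sum>j<B. \<Sum>l<B. of_nat i * c i j l * v1 ^ (i - 1) * v2 ^ j * v3 ^ l)"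
      by (rule sum_shift0) (simp_all add: c_def bnd_zero_i[OF B])
    finally show ?thesis .
  qed
  have GY: "evalp (dY F) v = (\<Sum>i<B. \<Sum>j<B. \<Sum>l<B. of_nat j * c i j l * v1 ^ i * v2 ^ (j - 1) * v3 ^ l)"
  proof -
    have "evalp (dY F) v = (\<Sum>i<B. \<Sum>j<B. (\<lambda>j. \<Sum>l<B. of_nat j * c i j l * v1 ^ i * v2 ^ (j - 1) * v3 ^ l) (Suc j))"
      unfolding evalp_def EV[OF bnd_dY[OF B]] coeff3_dY by (simp add: v c_def mult_ac del: of_nat_Suc)
    also have "\<dots> = (\<Sum>i<B. \<Sum>j<B. \<Sum>l<B. of_nat j * c i j l * v1 ^ i * v2 ^ (j - 1) * v3 ^ l)"
      by (rule sum.cong[OF refl], rule sum_shift0) (simp_all add: c_def bnd_zero_j[OF B])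
    finally show ?thesis .
  qed
  have GZ: "evalp (dZ F) v = (\<Sum>i<B. \<Sum>j<B. \<Sum>l<B. of_nat l * c i j l * v1 ^ i * v2 ^ j * v3 ^ (l - 1))"
  proof -
    have "evalp (dZ F) v = (\<Sum>i<B. \<Sum>j<B. \<Sum>l<B. (\<lambda>l. of_nat l * c i j l * v1 ^ i * v2 ^ j * v3 ^ (l - 1)) (Suc l))"
      unfolding evalp_def EV[OF bnd_dZ[OF B]] coeff3_dZ by (simp add: v c_def mult_ac del: of_nat_Suc)
    also have "\<dots> = (\<Sum>i<B. \<Sum>j<B. \<Sum>l<B. of_nat l * c i j l * v1 ^ i * v2 ^ j * v3 ^ (l - 1))"
      by (rule sum.cong[OF refl], rule sum.cong[OF refl], rule sum_shift0) (simp_all add: c_def bnd_zero_l[OF B])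
    finally show ?thesis .
  qed
  show ?thesis
    unfolding L gradient_def dot_def GX GY GZ
    by (simp add: w sum.distrib sum_distrib_right sum_distrib_left mult_ac)
qed



lemma alg_closed_root: "alg_closed TYPE('k::field) \<Longrightarrow> degree (p::'k poly) > 0 \<Longrightarrow> \<exists>x. poly p x = 0"
  unfolding alg_closed_def by blast

lemma alg_closed_infinite:
  assumes ac: "alg_closed TYPE('k::field)"
  shows "infinite (UNIV::'k set)"
proof
  assume fin: "finite (UNIV::'k set)"
  define P where "P = (\<Prod>a\<in>(UNIV::'k set). [:-a, 1:])"
  have P0: "P \<noteq> 0" unfolding P_def using fin by (simp add: prod_zero_iff)
  have Pev: "poly P x = 0" for x unfolding P_def poly_prod using fin
    by (simp add: prod_zero_iff)
  show False
  proof (cases "degree (P + 1) = 0")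
    case True
    then obtain c where c: "P + 1 = [:c:]" by (metis degree_eq_zeroE)
    then have "P = [:c - 1:]" by (metis add_diff_cancel_right' diff_pCons diff_0_right one_pCons pCons_0_0)
    with Pev[of 0] P0 show False by simp
  next
    case False
    then obtain x where "poly (P + 1) x = 0" using alg_closed_root[OF ac] by blast
    with Pev[of x] show False by simp
  qed
qed

lemma poly_eq_inf:
  fixes p q :: "'k::field poly"
  assumes "infinite S" "\<And>s. s \<in> S \<Longrightarrow> poly p s = poly q s"
  shows "p = q"
proof (rule ccontr)
  assume "p \<noteq> q"
  then have "p - q \<noteq> 0" by simp
  then have "finite {x. poly (p - q) x = 0}" by (rule poly_roots_finite)
  moreover have "S \<subseteq> {x. poly (p - q) x = 0}" using assms(2) by auto
  ultimately show False using assms(1) finite_subset by blast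
qed

lemma nonroots_infinite:
  fixes X :: "'k::field poly"
  assumes "infinite (UNIV::'k set)" "X \<noteq> 0"
  shows "infinite {s. poly X s \<noteq> 0}"
proof -
  have "{s. poly X s \<noteq> 0} = UNIV - {s. poly X s = 0}" by auto
  then show ?thesis using assms poly_roots_finite by (metis Diff_infinite_finite)
qed

lemma sum_orders:
  assumes ac: "alg_closed TYPE('k::field)"
  shows "(p::'k poly) \<noteq> 0 \<Longrightarrow> (\<Sum>r\<in>{r. poly p r = 0}. order r p) = degree p"
proof (induction "degree p" arbitrary: p)
  case 0
  then have "{r. poly p r = 0} = {}" by (auto elim: degree_eq_zeroE)
  then show ?case using 0 by simp
next
  case (Suc d)
  then obtain r0 where r0: "poly p r0 = 0" using alg_closed_root[OF ac] by (metis zero_less_Suc)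
  then obtain g where pg: "p = [:-r0, 1:] * g" by (metis dvdE poly_eq_0_iff_dvd)
  have g0: "g \<noteq> 0" using Suc.prems pg by auto
  have "degree p = degree [:-r0, 1:] + degree g" unfolding pg by (rule degree_mult_eq) (use g0 in auto)
  then have dg: "degree g = d" using Suc.hyps(2) by simp
  have IH: "(\<Sum>r\<in>{r. poly g r = 0}. order r g) = d" using Suc.hyps(1)[OF dg[symmetric] g0] dg by simp
  have fin: "finite {r. poly p r = 0}" using Suc.prems poly_roots_finite by blast
  have ord: "order r p = (if r = r0 then 1 else 0) + order r g" for r
  proof -
    have "order r p = order r [:-r0, 1:] + order r g" unfolding pg
      by (rule order_mult) (use Suc.prems pg in simp)
    moreover have "order r [:-r0, 1:] = (if r = r0 then 1 else 0)"
    proof (cases "r = r0")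
      case True then show ?thesis using order_power_n_n[of r0 1] by simp
    next
      case False then have "poly [:-r0, 1:] r \<noteq> 0" by simp
      then have "order r [:-r0, 1:] = 0" by (rule order_0I)
      then show ?thesis using False by simp
    qed
    ultimately show ?thesis by simp
  qed
  have "(\<Sum>r\<in>{r. poly p r = 0}. order r p) =
      (\<Sum>r\<in>{r. poly p r = 0}. (if r = r0 then 1 else 0)) + (\<Sum>r\<in>{r. poly p r = 0}. order r g)"
    unfolding ord by (simp add: sum.distrib)
  also have "(\<Sum>r\<in>{r. poly p r = 0}. (if r = r0 then 1 else 0)) = (1::nat)"
    using fin r0 by (simp add: sum.delta)
  also have "(\<Sum>r\<in>{r. poly p r = 0}. order r g) = (\<Sum>r\<in>{r. poly g r = 0}. order r g)"
  proof (rule sum.mono_neutral_right[OF fin])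
    show "{r. poly g r = 0} \<subseteq> {r. poly p r = 0}" using pg by auto
    show "\<forall>i\<in>{r. poly p r = 0} - {r. poly g r = 0}. order i g = 0" using order_0I by blast
  qed
  finally show ?case using IH Suc.hyps(2) by simp
qed



lemma restr_mult: "restr (F * G) v w = restr F v w * restr G v w"
  unfolding restr_alt rhD(3)[OF rh_map3[OF rh_const]] eval3_mult ..

lemma evalp_mult: "evalp (F * G) u = evalp F u * evalp G u"
  unfolding evalp_def eval3_mult ..

lemma EULER:
  fixes F :: "'k::field poly3"
  assumes inf: "infinite (UNIV::'k set)" and hom: "homogeneous F n" and z: "evalp F v = 0"
  shows "dot (gradient F v) v = 0"
proof -
  have "restr F v v = 0"
  proof (rule poly_eq_inf[OF inf])
    fix s :: 'k
    have "vadd v (vsc s v) = vsc (1 + s) v" by (simp add: vadd_def vsc_def algebra_simps)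
    then show "poly (restr F v v) s = poly 0 s" by (simp add: E1 E2[OF hom] z)
  qed
  then show ?thesis using GRAD[of F v v] by simp
qed

lemma EVALline:
  fixes F :: "'k::field poly3"
  assumes hom: "homogeneous F n" and X: "x1 + s * x2 \<noteq> 0"
  shows "poly (restr F (vadd (vsc x1 a) (vsc y1 b)) (vadd (vsc x2 a) (vsc y2 b))) s =
     (x1 + s * x2) ^ n * poly (restr F a b) ((y1 + s * y2) / (x1 + s * x2))"
proof -
  have "vadd (vadd (vsc x1 a) (vsc y1 b)) (vsc s (vadd (vsc x2 a) (vsc y2 b))) =
      vsc (x1 + s * x2) (vadd a (vsc ((y1 + s * y2) / (x1 + s * x2)) b))"
    using X by (simp add: vadd_def vsc_def field_simps)
  then show ?thesis by (simp add: E1 E2[OF hom])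
qed

definition hpoly :: "nat \<Rightarrow> 'k::comm_ring_1 poly \<Rightarrow> 'k poly \<Rightarrow> 'k poly \<Rightarrow> 'k poly" where
  "hpoly N g X Y = (\<Sum>i\<le>N. [:coeff g i:] * X ^ (N - i) * Y ^ i)"

lemma poly_hpoly: "poly (hpoly N g X Y) s = (\<Sum>i\<le>N. coeff g i * poly X s ^ (N - i) * poly Y s ^ i)"
  by (simp add: hpoly_def poly_sum mult.assoc)

lemma HOMEV:
  fixes g :: "'k::field poly"
  assumes "degree g \<le> N" "poly X s \<noteq> 0"
  shows "poly (hpoly N g X Y) s = poly X s ^ N * poly g (poly Y s / poly X s)"
proof -
  have pg: "poly g z = (\<Sum>i\<le>N. coeff g i * z ^ i)" for z
  proof -
    have "(\<Sum>i\<le>N. coeff g i * z ^ i) = (\<Sum>i\<le>degree g. coeff g i * z ^ i)"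
      by (rule sum.mono_neutral_right) (use assms(1) in \<open>auto simp: coeff_eq_0\<close>)
    then show ?thesis by (simp add: poly_altdef)
  qed
  have hh: "poly X s ^ N * (coeff g i * (poly Y s / poly X s) ^ i) = coeff g i * poly X s ^ (N - i) * poly Y s ^ i"
    if "i \<le> N" for i
  proof -
    have "poly X s ^ N = poly X s ^ (N - i) * poly X s ^ i" using that by (simp add: power_add[symmetric])
    then show ?thesis using assms(2) by (simp add: power_divide field_simps)
  qed
  show ?thesis unfolding poly_hpoly pg sum_distrib_left
    by (rule sum.cong[OF refl], rule hh[symmetric]) auto
qed

lemma order_lin_power: "c \<noteq> 0 \<Longrightarrow> order 0 ([:0, c:] ^ m) = m"
proof -
  assume c: "c \<noteq> 0"
  have "[:0, c:] = monom c 1" by (simp add: monom_Suc monom_0)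
  then have "[:0, c:] ^ m = monom (c ^ m) m" by (simp add: monom_power)
  then show ?thesis using c by simp
qed

lemma CL0:
  fixes F :: "'k::field poly3"
  assumes inf: "infinite (UNIV::'k set)" and hom: "homogeneous F n" and f: "restr F a b = 0"
    and nz: "x1 \<noteq> 0 \<or> x2 \<noteq> 0"
  shows "restr F (vadd (vsc x1 a) (vsc y1 b)) (vadd (vsc x2 a) (vsc y2 b)) = 0"
proof (rule poly_eq_inf[OF nonroots_infinite[OF inf]])
  show "[:x1, x2:] \<noteq> 0" using nz by auto
  fix s assume "s \<in> {s. poly [:x1, x2:] s \<noteq> 0}"
  then have "x1 + s * x2 \<noteq> 0" by (simp add: mult.commute)
  then show "poly (restr F (vadd (vsc x1 a) (vsc y1 b)) (vadd (vsc x2 a) (vsc y2 b))) s = poly 0 s"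
    by (simp add: EVALline[OF hom] f)
qed

lemma CL:
  fixes F :: "'k::field poly3"
  assumes inf: "infinite (UNIV::'k set)" and hom: "homogeneous F n" and f: "restr F a b \<noteq> 0"
    and det: "x1 * y2 - x2 * y1 \<noteq> 0"
  shows "restr F (vadd (vsc x1 a) (vsc y1 b)) (vadd (vsc x2 a) (vsc y2 b)) \<noteq> 0 \<and>
    order 0 (restr F (vadd (vsc x1 a) (vsc y1 b)) (vadd (vsc x2 a) (vsc y2 b))) =
      (if x1 \<noteq> 0 then order (y1 / x1) (restr F a b) else n - degree (restr F a b))"
proof -
  define rho where "rho = restr F (vadd (vsc x1 a) (vsc y1 b)) (vadd (vsc x2 a) (vsc y2 b))"
  define f where "f = restr F a b"
  have f0: "f \<noteq> 0" using f f_def by simp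
  have degf: "degree f \<le> n" unfolding f_def by (rule DEG[OF hom])
  define X where "X = [:x1, x2:]"
  define Y where "Y = [:y1, y2:]"
  have pX: "poly X s = x1 + s * x2" for s by (simp add: X_def mult.commute)
  have pY: "poly Y s = y1 + s * y2" for s by (simp add: Y_def mult.commute)
  have ev: "poly rho s = poly X s ^ n * poly f (poly Y s / poly X s)" if "poly X s \<noteq> 0" for s
    unfolding rho_def f_def pX pY by (rule EVALline[OF hom]) (use that pX in simp)
  show ?thesis
  proof (cases "x1 \<noteq> 0")
    case True
    define r where "r = y1 / x1"
    define m where "m = order r f"
    obtain g where fg: "f = [:-r, 1:] ^ m * g" and nd: "\<not> [:-r, 1:] dvd g"
      using order_decomp[OF f0] m_def by blast
    have g0: "g \<noteq> 0" using f0 fg by auto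
    have gr: "poly g r \<noteq> 0" using nd by (simp add: poly_eq_0_iff_dvd)
    have "degree f = m + degree g" unfolding fg
      by (subst degree_mult_eq) (use g0 in \<open>auto simp: degree_linear_power\<close>)
    then have mn: "m \<le> n" and dg: "degree g \<le> n - m" using degf by auto
    define c where "c = y2 - r * x2"
    have c0: "c \<noteq> 0"
    proof
      assume "c = 0"
      then have "x1 * y2 - x2 * y1 = 0" using True by (simp add: c_def r_def field_simps)
      with det show False by simp
    qed
    define H where "H = hpoly (n - m) g X Y"
    have rhoeq: "rho = [:0, c:] ^ m * H"
    proof (rule poly_eq_inf[OF nonroots_infinite[OF inf]])
      show "X \<noteq> 0" using True by (simp add: X_def)
      fix s assume "s \<in> {s. poly X s \<noteq> 0}"
      then have Xs: "poly X s \<noteq> 0" by simp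
      have rx: "y1 = r * x1" using True by (simp add: r_def)
      have "poly X s * (poly Y s / poly X s - r) = poly Y s - r * poly X s" using Xs by (simp add: field_simps)
      also have "\<dots> = s * c" unfolding pX pY c_def rx by (simp add: algebra_simps)
      finally have key: "poly X s * (poly Y s / poly X s - r) = s * c" .
      have "poly rho s = poly X s ^ n * ((poly Y s / poly X s - r) ^ m * poly g (poly Y s / poly X s))"
        using ev[OF Xs] unfolding fg by simp
      also have "poly X s ^ n = poly X s ^ (n - m) * poly X s ^ m" using mn by (simp add: power_add[symmetric])
      also have "poly X s ^ (n - m) * poly X s ^ m * ((poly Y s / poly X s - r) ^ m * poly g (poly Y s / poly X s))
          = (poly X s * (poly Y s / poly X s - r)) ^ m * (poly X s ^ (n - m) * poly g (poly Y s / poly X s))"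
        by (simp add: power_mult_distrib mult_ac)
      also have "\<dots> = (s * c) ^ m * poly H s" unfolding key H_def HOMEV[OF dg Xs] ..
      also have "\<dots> = poly ([:0, c:] ^ m * H) s" by (simp add: poly_power mult.commute)
      finally show "poly rho s = poly ([:0, c:] ^ m * H) s" .
    qed
    have H0: "poly H 0 \<noteq> 0"
    proof -
      have "poly X 0 \<noteq> 0" using True pX by simp
      then have "poly H 0 = x1 ^ (n - m) * poly g r" unfolding H_def
        by (subst HOMEV[OF dg]) (simp_all add: pX pY r_def)
      then show ?thesis using True gr by simp
    qed
    then have Hnz: "H \<noteq> 0" by auto
    have "order 0 rho = order 0 ([:0, c:] ^ m) + order 0 H" unfolding rhoeq
      by (rule order_mult) (use c0 Hnz in simp)
    then have "order 0 rho = m" using order_lin_power[OF c0] order_0I[OF H0] by simp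
    moreover have "rho \<noteq> 0" unfolding rhoeq using c0 Hnz by simp
    ultimately show ?thesis using True unfolding rho_def m_def r_def f_def by simp
  next
    case False
    then have x1: "x1 = 0" by simp
    then have x2: "x2 \<noteq> 0" and y1: "y1 \<noteq> 0" using det by auto
    define D where "D = degree f"
    define H where "H = hpoly D f X Y"
    have rhoeq: "rho = [:0, x2:] ^ (n - D) * H"
    proof (rule poly_eq_inf[OF nonroots_infinite[OF inf]])
      show "X \<noteq> 0" using x2 by (simp add: X_def)
      fix s assume "s \<in> {s. poly X s \<noteq> 0}"
      then have Xs: "poly X s \<noteq> 0" by simp
      have "poly rho s = poly X s ^ (n - D) * (poly X s ^ D * poly f (poly Y s / poly X s))"
        using ev[OF Xs] degf by (simp add: D_def power_add[symmetric])
      also have "\<dots> = poly ([:0, x2:] ^ (n - D) * H) s"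
      proof -
        have "poly H s = poly X s ^ D * poly f (poly Y s / poly X s)"
          unfolding H_def by (rule HOMEV) (use Xs in \<open>simp_all add: D_def\<close>)
        then show ?thesis by (simp add: poly_power pX x1 mult.commute)
      qed
      finally show "poly rho s = poly ([:0, x2:] ^ (n - D) * H) s" .
    qed
    have H0: "poly H 0 \<noteq> 0"
    proof -
      have "poly H 0 = (\<Sum>i\<le>D. coeff f i * 0 ^ (D - i) * y1 ^ i)"
        unfolding H_def poly_hpoly pX pY x1 by simp
      also have "\<dots> = coeff f D * y1 ^ D"
      proof -
        have "(\<Sum>i\<le>D. coeff f i * 0 ^ (D - i) * y1 ^ i) = (\<Sum>i\<in>{D}. coeff f i * 0 ^ (D - i) * y1 ^ i)"
          by (rule sum.mono_neutral_right) auto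
        then show ?thesis by simp
      qed
      finally show ?thesis using f0 y1 by (simp add: D_def)
    qed
    then have Hnz: "H \<noteq> 0" by auto
    have "order 0 rho = order 0 ([:0, x2:] ^ (n - D)) + order 0 H" unfolding rhoeq
      by (rule order_mult) (use x2 Hnz in simp)
    then have "order 0 rho = n - D" using order_lin_power[OF x2] order_0I[OF H0] by simp
    moreover have "rho \<noteq> 0" unfolding rhoeq using x2 Hnz by simp
    ultimately show ?thesis using False unfolding rho_def D_def f_def by simp
  qed
qed



abbreviation z3 :: "'k::zero pt" where "z3 \<equiv> (0, 0, 0)"

lemma pclass_alt: "pclass v = {vsc c v | c. c \<noteq> 0}"
  by (simp add: pclass_def vsc_def)

lemma mem_pclass: "u \<in> pclass v \<longleftrightarrow> (\<exists>c. c \<noteq> 0 \<and> u = vsc c v)"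
  by (auto simp: pclass_alt)

lemma vsc_1[simp]: "vsc 1 v = v" by (simp add: vsc_def)
lemma vsc_vsc: "vsc a (vsc b v) = vsc (a * b) v" by (simp add: vsc_def mult.assoc)
lemma vsc_z3_iff: "vsc c (v::'k::field pt) = z3 \<longleftrightarrow> c = 0 \<or> v = z3"
  by (cases v) (auto simp: vsc_def)

lemma self_pclass: "v \<in> pclass (v::'k::field pt)"
  unfolding mem_pclass by (rule exI[of _ 1]) simp

lemma rep_pclass: "\<exists>c. c \<noteq> 0 \<and> rep (pclass (v::'k::field pt)) = vsc c v"
proof -
  have "rep (pclass v) \<in> pclass v" unfolding rep_def by (rule someI[of _ v]) (rule self_pclass)
  then show ?thesis by (simp add: mem_pclass)
qed

lemma pclass_vsc: "c \<noteq> 0 \<Longrightarrow> pclass (vsc c (v::'k::field pt)) = pclass v"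
proof (intro set_eqI iffI)
  fix u assume c: "c \<noteq> 0"
  { assume "u \<in> pclass (vsc c v)"
    then obtain d where "d \<noteq> 0" "u = vsc d (vsc c v)" by (auto simp: mem_pclass)
    then show "u \<in> pclass v" using c unfolding mem_pclass vsc_vsc
      by (intro exI[of _ "d * c"]) simp }
  { assume "u \<in> pclass v"
    then obtain d where d: "d \<noteq> 0" "u = vsc d v" by (auto simp: mem_pclass)
    then have "u = vsc (d / c) (vsc c v)" using c by (simp add: vsc_vsc)
    then show "u \<in> pclass (vsc c v)" unfolding mem_pclass
      by (intro exI[of _ "d / c"]) (use c d in simp) }
qed

lemma P2_I: "v \<noteq> z3 \<Longrightarrow> pclass v \<in> P2"
  unfolding P2_def by blast

lemma P2_D:
  assumes "P \<in> (P2 :: 'k::field pt set set)"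
  shows "rep P \<in> P" "rep P \<noteq> z3" "P = pclass (rep P)"
proof -
  obtain v where v: "v \<noteq> z3" "P = pclass v" using assms by (auto simp: P2_def)
  obtain c where c: "c \<noteq> 0" "rep P = vsc c v" using rep_pclass[of v] v by auto
  show "rep P \<in> P" using c v by (auto simp: mem_pclass)
  show "rep P \<noteq> z3" using c v by (simp add: vsc_z3_iff)
  show "P = pclass (rep P)" using c v by (simp add: pclass_vsc)
qed

lemma P2_mem_eq:
  assumes "P \<in> (P2 :: 'k::field pt set set)" "u \<in> P"
  shows "u \<noteq> z3" "P = pclass u"
proof -
  obtain v where v: "v \<noteq> z3" "P = pclass v" using assms by (auto simp: P2_def)
  then obtain c where c: "c \<noteq> 0" "u = vsc c v" using assms by (auto simp: mem_pclass)
  show "u \<noteq> z3" using c v by (simp add: vsc_z3_iff)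
  show "P = pclass u" using c v by (simp add: pclass_vsc)
qed

lemma pclass_eq_D:
  assumes "pclass v = pclass (w::'k::field pt)"
  shows "\<exists>c. c \<noteq> 0 \<and> w = vsc c v"
proof -
  have "w \<in> pclass v" using assms self_pclass by metis
  then show ?thesis by (simp add: mem_pclass)
qed

lemma dot_vsc_l: "dot (vsc c u) w = c * dot u w" by (simp add: dot_def vsc_def algebra_simps)
lemma dot_vsc_r: "dot u (vsc c w) = c * dot u w" by (simp add: dot_def vsc_def algebra_simps)
lemma dot_vadd_r: "dot u (vadd v w) = dot u v + dot u w" by (simp add: dot_def vadd_def algebra_simps)
lemma dot_comm: "dot u w = dot w u" by (simp add: dot_def mult.commute)

lemma inc_sym: "inc P L \<longleftrightarrow> inc L P" by (simp add: inc_def dot_comm)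

definition cross :: "'k::comm_ring_1 pt \<Rightarrow> 'k pt \<Rightarrow> 'k pt" where
  "cross u v = (fst (snd u) * snd (snd v) - snd (snd u) * fst (snd v),
                snd (snd u) * fst v - fst u * snd (snd v),
                fst u * fst (snd v) - fst (snd u) * fst v)"

lemma cross_zero:
  fixes v w :: "'k::field pt"
  assumes "v \<noteq> z3" "cross v w = z3"
  shows "\<exists>c. w = vsc c v"
proof -
  obtain v1 v2 v3 where v: "v = (v1, v2, v3)" by (cases v) auto
  obtain w1 w2 w3 where w: "w = (w1, w2, w3)" by (cases w) auto
  have e: "v2 * w3 = v3 * w2" "v3 * w1 = v1 * w3" "v1 * w2 = v2 * w1"
    using assms(2) by (simp_all add: cross_def v w)
  show ?thesis
  proof (cases "v1 \<noteq> 0")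
    case True
    show ?thesis
      by (rule exI[of _ "w1 / v1"]) (use True e in \<open>simp add: v w vsc_def field_simps\<close>)
  next
    case n1: False
    show ?thesis
    proof (cases "v2 \<noteq> 0")
      case True
      show ?thesis
        by (rule exI[of _ "w2 / v2"]) (use True n1 e in \<open>simp add: v w vsc_def field_simps\<close>)
    next
      case n2: False
      then have "v3 \<noteq> 0" using assms(1) n1 v by auto
      then show ?thesis
        by (intro exI[of _ "w3 / v3"]) (use n1 n2 e in \<open>simp add: v w vsc_def field_simps\<close>)
    qed
  qed
qed

lemma perp_cross:
  fixes g v w :: "'k::field pt"
  assumes "dot g v = 0" "dot g w = 0" "cross v w \<noteq> z3"
  shows "\<exists>c. g = vsc c (cross v w)"
proof -
  have "cross (cross v w) g = (fst w * dot g v - fst v * dot g w,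
      fst (snd w) * dot g v - fst (snd v) * dot g w, snd (snd w) * dot g v - snd (snd v) * dot g w)"
    by (simp add: cross_def dot_def algebra_simps)
  then have "cross (cross v w) g = z3" using assms by simp
  then show ?thesis using cross_zero assms(3) by blast
qed

lemma pclass_neq_cross:
  fixes v w :: "'k::field pt"
  assumes "v \<noteq> z3" "w \<noteq> z3" "pclass v \<noteq> pclass w"
  shows "cross v w \<noteq> z3"
proof
  assume "cross v w = z3"
  then obtain c where c: "w = vsc c v" using cross_zero assms(1) by blast
  then have "c \<noteq> 0" using assms(2) by (auto simp: vsc_def)
  then show False using assms(3) c pclass_vsc by metis
qed

definition inF :: "'k set \<Rightarrow> 'k pt \<Rightarrow> bool" where
  "inF S v \<longleftrightarrow> fst v \<in> S \<and> fst (snd v) \<in> S \<and> snd (snd v) \<in> S"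

definition lin :: "'k::comm_ring_1 \<Rightarrow> 'k pt \<Rightarrow> 'k \<Rightarrow> 'k pt \<Rightarrow> 'k pt" where
  "lin x a y b = vadd (vsc x a) (vsc y b)"

lemma span1: "(x0::'k::field) \<noteq> 0 \<Longrightarrow> x0*u1 + y0*u2 + z0*u3 = 0 \<Longrightarrow> (u1,u2,u3) = lin (u2/x0) (-y0,x0,0) (u3/x0) (-z0,0,x0)"
proof -
  assume a: "x0 \<noteq> 0" "x0*u1 + y0*u2 + z0*u3 = 0"
  have "x0*u1 = -(y0*u2 + z0*u3)" using a(2) by (simp add: eq_neg_iff_add_eq_0 algebra_simps)
  then have "u1 = -(y0*u2 + z0*u3)/x0" using a(1) by (simp add: eq_divide_eq mult.commute)
  then show ?thesis using a by (simp add: lin_def vadd_def vsc_def field_simps)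
qed
lemma span2: "(y0::'k::field) \<noteq> 0 \<Longrightarrow> x0*u1 + y0*u2 + z0*u3 = 0 \<Longrightarrow> (u1,u2,u3) = lin (u1/y0) (y0,-x0,0) (u3/y0) (0,-z0,y0)"
proof -
  assume a: "y0 \<noteq> 0" "x0*u1 + y0*u2 + z0*u3 = 0"
  have "y0*u2 = -(x0*u1 + z0*u3)" using a(2) by (simp add: eq_neg_iff_add_eq_0 algebra_simps)
  then have "u2 = -(x0*u1 + z0*u3)/y0" using a(1) by (simp add: eq_divide_eq mult.commute)
  then show ?thesis using a by (simp add: lin_def vadd_def vsc_def field_simps)
qed
lemma span3: "(z0::'k::field) \<noteq> 0 \<Longrightarrow> x0*u1 + y0*u2 + z0*u3 = 0 \<Longrightarrow> (u1,u2,u3) = lin (u1/z0) (z0,0,-x0) (u2/z0) (0,z0,-y0)"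
proof -
  assume a: "z0 \<noteq> 0" "x0*u1 + y0*u2 + z0*u3 = 0"
  have "z0*u3 = -(x0*u1 + y0*u2)" using a(2) by (simp add: eq_neg_iff_add_eq_0 algebra_simps)
  then have "u3 = -(x0*u1 + y0*u2)/z0" using a(1) by (simp add: eq_divide_eq mult.commute)
  then show ?thesis using a by (simp add: lin_def vadd_def vsc_def field_simps)
qed

lemma basis_ex:
  fixes q0 :: "'k::field pt"
  assumes "q0 \<noteq> z3"
  shows "\<exists>a b. dot q0 a = 0 \<and> dot q0 b = 0 \<and> (\<forall>u. dot q0 u = 0 \<longrightarrow> (\<exists>x y. u = lin x a y b)) \<and>
     (\<forall>x y. lin x a y b = z3 \<longrightarrow> x = 0 \<and> y = 0) \<and>
     (\<forall>S. subfield S \<longrightarrow> inF S q0 \<longrightarrow> inF S a \<and> inF S b)"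
proof -
  obtain x0 y0 z0 where q: "q0 = (x0, y0, z0)" by (cases q0) auto
  have sf: "subfield S \<Longrightarrow> 0 \<in> S \<and> (\<forall>a\<in>S. - a \<in> S)" for S :: "'k set" by (simp add: subfield_def)
  show ?thesis
  proof (cases "x0 \<noteq> 0")
    case True
    show ?thesis
    proof (rule exI[of _ "(- y0, x0, 0)"], rule exI[of _ "(- z0, 0, x0)"], intro conjI allI impI)
      fix u :: "'k pt" assume du: "dot q0 u = 0"
      show "\<exists>x y. u = lin x (- y0, x0, 0) y (- z0, 0, x0)"
        by (rule exI[of _ "fst (snd u) / x0"], rule exI[of _ "snd (snd u) / x0"])
           (use du True in \<open>cases u, auto simp: q dot_def intro!: span1\<close>)
    next
      fix x y assume "lin x (- y0, x0, 0) y (- z0, 0, x0) = z3"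
      then show "x = 0" "y = 0" using True by (simp_all add: lin_def vadd_def vsc_def)
    next
      fix S assume "subfield S" "inF S q0"
      then show "inF S (- y0, x0, 0)" "inF S (- z0, 0, x0)" using sf[of S] by (simp_all add: inF_def q)
    qed (simp_all add: q dot_def)
  next
    case n1: False
    show ?thesis
    proof (cases "y0 \<noteq> 0")
      case True
      show ?thesis
      proof (rule exI[of _ "(y0, - x0, 0)"], rule exI[of _ "(0, - z0, y0)"], intro conjI allI impI)
        fix u :: "'k pt" assume du: "dot q0 u = 0"
        show "\<exists>x y. u = lin x (y0, - x0, 0) y (0, - z0, y0)"
          by (rule exI[of _ "fst u / y0"], rule exI[of _ "snd (snd u) / y0"])
             (use du True in \<open>cases u, auto simp: q dot_def intro!: span2\<close>)
      next
        fix x y assume "lin x (y0, - x0, 0) y (0, - z0, y0) = z3"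
        then show "x = 0" "y = 0" using True by (simp_all add: lin_def vadd_def vsc_def)
      next
        fix S assume "subfield S" "inF S q0"
        then show "inF S (y0, - x0, 0)" "inF S (0, - z0, y0)" using sf[of S] by (simp_all add: inF_def q)
      qed (simp_all add: q dot_def)
    next
      case n2: False
      then have z: "z0 \<noteq> 0" using assms n1 q by auto
      show ?thesis
      proof (rule exI[of _ "(z0, 0, - x0)"], rule exI[of _ "(0, z0, - y0)"], intro conjI allI impI)
        fix u :: "'k pt" assume du: "dot q0 u = 0"
        show "\<exists>x y. u = lin x (z0, 0, - x0) y (0, z0, - y0)"
          by (rule exI[of _ "fst u / z0"], rule exI[of _ "fst (snd u) / z0"])
             (use du z in \<open>cases u, auto simp: q dot_def intro!: span3\<close>)
      next
        fix x y assume "lin x (z0, 0, - x0) y (0, z0, - y0) = z3"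
        then show "x = 0" "y = 0" using z by (simp_all add: lin_def vadd_def vsc_def)
      next
        fix S assume "subfield S" "inF S q0"
        then show "inF S (z0, 0, - x0)" "inF S (0, z0, - y0)" using sf[of S] by (simp_all add: inF_def q)
      qed (simp_all add: q dot_def)
    qed
  qed
qed



definition lineB :: "'k::field pt set \<Rightarrow> 'k pt \<Rightarrow> 'k pt \<Rightarrow> bool" where
  "lineB Q a b \<longleftrightarrow> (\<forall>u. dot (rep Q) u = 0 \<longleftrightarrow> (\<exists>x y. u = lin x a y b)) \<and>
     (\<forall>x y. lin x a y b = z3 \<longrightarrow> x = 0 \<and> y = 0)"

definition Rsel :: "'k::field pt set \<Rightarrow> 'k pt set \<Rightarrow> 'k pt set" where
  "Rsel Q L = (SOME R. R \<in> P2 \<and> R \<noteq> L \<and> inc R Q)"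

definition ordQ :: "'k::field poly3 \<Rightarrow> 'k pt set \<Rightarrow> 'k pt set \<Rightarrow> nat" where
  "ordQ F Q L = order 0 (restr F (rep L) (rep (Rsel Q L)))"

lemma imult_alt: "imult F L Q = (if restr F (rep L) (rep (Rsel Q L)) = 0 then \<infinity>
    else enat (ordQ F Q L))"
  by (simp add: imult_def Rsel_def ordQ_def Let_def)

lemma vsc_lin: "vsc c (lin x a y b) = lin (c * x) a (c * y) b"
  by (simp add: lin_def vadd_def vsc_def algebra_simps)

lemma lin_diff_z3: "lin x a y b = lin x' a y' b \<Longrightarrow> lin (x - x') a (y - y') b = z3"
  by (simp add: lin_def vadd_def vsc_def algebra_simps)

lemma lineB_indep: "lineB Q a b \<Longrightarrow> lin x a y b = lin x' a y' b \<Longrightarrow> x = x' \<and> y = y'"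
  unfolding lineB_def by (metis lin_diff_z3 right_minus_eq)

lemma lineB_nz: "lineB Q a b \<Longrightarrow> x \<noteq> 0 \<or> y \<noteq> 0 \<Longrightarrow> lin x a y b \<noteq> z3"
  unfolding lineB_def by blast

lemma on_line_coords:
  assumes "lineB Q a b" "L \<in> P2" "inc Q L"
  shows "\<exists>x y. rep L = lin x a y b \<and> (x \<noteq> 0 \<or> y \<noteq> 0)"
proof -
  obtain x y where xy: "rep L = lin x a y b" using assms unfolding lineB_def inc_def by blast
  moreover have "x \<noteq> 0 \<or> y \<noteq> 0"
  proof (rule ccontr)
    assume "\<not> (x \<noteq> 0 \<or> y \<noteq> 0)"
    then have "rep L = z3" using xy by (simp add: lin_def vadd_def vsc_def)
    with P2_D(2)[OF assms(2)] show False by simp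
  qed
  ultimately show ?thesis by blast
qed

lemma line_pt:
  assumes "lineB Q a b" "x \<noteq> 0 \<or> y \<noteq> 0"
  shows "pclass (lin x a y b) \<in> P2" "inc Q (pclass (lin x a y b))"
proof -
  show "pclass (lin x a y b) \<in> P2" by (rule P2_I) (rule lineB_nz[OF assms])
  obtain c where c: "rep (pclass (lin x a y b)) = vsc c (lin x a y b)" using rep_pclass by blast
  have "dot (rep Q) (lin x a y b) = 0" using assms(1) unfolding lineB_def by blast
  then show "inc Q (pclass (lin x a y b))" unfolding inc_def c dot_vsc_r by simp
qed

lemma pcl_lin_eq:
  assumes "lineB Q a b" "pclass (lin x1 a y1 b) = pclass (lin x2 a y2 b)"
  shows "x1 * y2 - x2 * y1 = 0"
proof -
  obtain c where "lin x2 a y2 b = vsc c (lin x1 a y1 b)" using pclass_eq_D[OF assms(2)] by blast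
  then have "x2 = c * x1 \<and> y2 = c * y1" unfolding vsc_lin using lineB_indep[OF assms(1)] by blast
  then show ?thesis by (simp add: algebra_simps)
qed

lemma Rsel_props:
  assumes "lineB Q a b" "L \<in> P2"
  shows "Rsel Q L \<in> P2" "Rsel Q L \<noteq> L" "inc (Rsel Q L) Q"
proof -
  let ?A = "pclass (lin 1 a 0 b)" and ?B = "pclass (lin 0 a 1 b)"
  have A: "?A \<in> P2" "inc ?A Q" using line_pt[OF assms(1), of 1 0] inc_sym by auto
  have B: "?B \<in> P2" "inc ?B Q" using line_pt[OF assms(1), of 0 1] inc_sym by auto
  have AB: "?A \<noteq> ?B" using pcl_lin_eq[OF assms(1), of 1 0 0 1] by auto
  have "\<exists>R. R \<in> P2 \<and> R \<noteq> L \<and> inc R Q"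
  proof (cases "?A = L")
    case True then show ?thesis using B AB by blast
  next
    case False then show ?thesis using A by blast
  qed
  then have "Rsel Q L \<in> P2 \<and> Rsel Q L \<noteq> L \<and> inc (Rsel Q L) Q"
    unfolding Rsel_def by (rule someI_ex)
  then show "Rsel Q L \<in> P2" "Rsel Q L \<noteq> L" "inc (Rsel Q L) Q" by auto
qed

lemma det_nz:
  assumes "lineB Q a b" "L \<in> P2" "R \<in> P2" "L \<noteq> R" "rep L = lin x1 a y1 b" "rep R = lin x2 a y2 b"
  shows "x1 * y2 - x2 * y1 \<noteq> 0"
proof
  assume det: "x1 * y2 - x2 * y1 = 0"
  have nzL: "x1 \<noteq> 0 \<or> y1 \<noteq> 0" using P2_D(2)[OF assms(2)] assms(5) by (auto simp: lin_def vadd_def vsc_def)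
  obtain c where c: "x2 = c * x1" "y2 = c * y1"
  proof (cases "x1 \<noteq> 0")
    case True
    show ?thesis by (rule that[of "x2 / x1"]) (use True det in \<open>simp_all add: field_simps\<close>)
  next
    case False
    then have "y1 \<noteq> 0" using nzL by simp
    moreover have "x2 = 0" using False det \<open>y1 \<noteq> 0\<close> by simp
    ultimately show ?thesis using False by (intro that[of "y2 / y1"]) simp_all
  qed
  then have "rep R = vsc c (rep L)" using assms(5,6) by (simp add: vsc_lin)
  moreover have "c \<noteq> 0" using P2_D(2)[OF assms(3)] calculation by (auto simp: vsc_def)
  ultimately have "pclass (rep R) = pclass (rep L)" by (simp add: pclass_vsc)
  then show False using P2_D(3)[OF assms(2)] P2_D(3)[OF assms(3)] assms(4) by simp
qed

lemma ordQ_formula: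
  fixes F :: "'k::field poly3"
  assumes inf: "infinite (UNIV::'k set)" and hom: "homogeneous F n" and lB: "lineB Q a b"
    and f: "restr F a b \<noteq> 0" and L: "L \<in> P2" "inc Q L" and xy: "rep L = lin x1 a y1 b"
  shows "restr F (rep L) (rep (Rsel Q L)) \<noteq> 0 \<and>
    ordQ F Q L = (if x1 \<noteq> 0 then order (y1 / x1) (restr F a b) else n - degree (restr F a b))"
proof -
  have R: "Rsel Q L \<in> P2" "Rsel Q L \<noteq> L" "inc Q (Rsel Q L)"
    using Rsel_props[OF lB L(1)] inc_sym by auto
  obtain x2 y2 where xy2: "rep (Rsel Q L) = lin x2 a y2 b" using on_line_coords[OF lB R(1) R(3)] by blast
  have det: "x1 * y2 - x2 * y1 \<noteq> 0" using det_nz[OF lB L(1) R(1) R(2)[symmetric] xy xy2] .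
  show ?thesis unfolding ordQ_def xy xy2 lin_def using CL[OF inf hom f det] by simp
qed

lemma oncurve_iff:
  assumes "L \<in> P2" "restr F (rep L) w \<noteq> 0"
  shows "on_curve F L \<longleftrightarrow> order 0 (restr F (rep L) w) \<noteq> 0"
proof -
  have "evalp F (rep L) = poly (restr F (rep L) w) 0" by (simp add: E1 vadd_def vsc_def)
  then show ?thesis using assms by (simp add: on_curve_def order_root)
qed

lemma BEZOUT:
  fixes F :: "'k::field poly3"
  assumes ac: "alg_closed TYPE('k)" and hom: "homogeneous F n" and lB: "lineB Q a b"
    and f: "restr F a b \<noteq> 0"
  shows "finite {L \<in> P2. inc Q L \<and> on_curve F L} \<and>
    (\<Sum>L\<in>{L \<in> P2. inc Q L \<and> on_curve F L}. ordQ F Q L) = n"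
proof -
  have inf: "infinite (UNIV::'k set)" by (rule alg_closed_infinite[OF ac])
  define fp where "fp = restr F a b"
  define Z where "Z = {L \<in> P2. inc Q L \<and> on_curve F L}"
  define rts where "rts = {r. poly fp r = 0}"
  define pt where "pt r = pclass (lin 1 a r b)" for r
  define pb where "pb = pclass (lin 0 a 1 b)"
  have finr: "finite rts" unfolding rts_def fp_def using f poly_roots_finite by blast
  have ordpt: "ordQ F Q (pt r) = order r fp" for r
  proof -
    obtain c where c: "c \<noteq> 0" "rep (pt r) = lin c a (c * r) b"
      using rep_pclass[of "lin 1 a r b"] unfolding pt_def vsc_lin by auto
    have "pt r \<in> P2" "inc Q (pt r)" using line_pt[OF lB, of 1 r] unfolding pt_def by auto
    then show ?thesis using ordQ_formula[OF inf hom lB f _ _ c(2)] c(1) by (simp add: fp_def)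
  qed
  have ordpb: "ordQ F Q pb = n - degree fp"
  proof -
    obtain c where c: "c \<noteq> 0" "rep pb = lin 0 a c b"
      using rep_pclass[of "lin 0 a 1 b"] unfolding pb_def vsc_lin by auto
    have "pb \<in> P2" "inc Q pb" using line_pt[OF lB, of 0 1] unfolding pb_def by auto
    then show ?thesis using ordQ_formula[OF inf hom lB f _ _ c(2)] by (simp add: fp_def)
  qed
  have nz: "restr F (rep L) (rep (Rsel Q L)) \<noteq> 0" if "L \<in> P2" "inc Q L" for L
    using on_line_coords[OF lB that] ordQ_formula[OF inf hom lB f that] by blast
  have ZZ: "Z \<subseteq> pt ` rts \<union> {pb}"
  proof
    fix L assume "L \<in> Z"
    then have L: "L \<in> P2" "inc Q L" "on_curve F L" by (auto simp: Z_def)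
    obtain x y where xy: "rep L = lin x a y b" "x \<noteq> 0 \<or> y \<noteq> 0" using on_line_coords[OF lB L(1,2)] by blast
    have oc: "ordQ F Q L \<noteq> 0" using oncurve_iff[OF L(1) nz[OF L(1,2)]] L(3) by (simp add: ordQ_def)
    have Leq: "L = pclass (lin x a y b)" using P2_D(3)[OF L(1)] xy(1) by simp
    show "L \<in> pt ` rts \<union> {pb}"
    proof (cases "x \<noteq> 0")
      case True
      have "order (y / x) fp \<noteq> 0" using oc ordQ_formula[OF inf hom lB f L(1,2) xy(1)] True by (simp add: fp_def)
      then have r: "y / x \<in> rts" unfolding rts_def using order_root by blast
      have "lin x a y b = vsc x (lin 1 a (y / x) b)" using True by (simp add: vsc_lin)
      then have "L = pt (y / x)" unfolding Leq pt_def using True by (simp add: pclass_vsc)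
      then show ?thesis using r by blast
    next
      case False
      then have "lin x a y b = vsc y (lin 0 a 1 b)" "y \<noteq> 0" using xy(2) by (simp_all add: vsc_lin)
      then have "L = pb" unfolding Leq pb_def by (simp add: pclass_vsc)
      then show ?thesis by blast
    qed
  qed
  have fin': "finite (pt ` rts \<union> {pb})" using finr by simp
  have zero: "\<forall>L\<in>(pt ` rts \<union> {pb}) - Z. ordQ F Q L = 0"
  proof
    fix L assume "L \<in> (pt ` rts \<union> {pb}) - Z"
    moreover have "L \<in> P2 \<and> inc Q L" if "L \<in> pt ` rts \<union> {pb}"
      using that line_pt[OF lB, of 1] line_pt[OF lB, of 0 1] unfolding pt_def pb_def by auto
    ultimately have "L \<in> P2" "inc Q L" "\<not> on_curve F L" by (auto simp: Z_def)
    then show "ordQ F Q L = 0" using oncurve_iff[OF \<open>L \<in> P2\<close> nz[OF \<open>L \<in> P2\<close> \<open>inc Q L\<close>]] by (simp add: ordQ_def)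
  qed
  have inj: "inj_on pt rts"
  proof
    fix r r' assume "pt r = pt r'"
    then have "1 * r' - 1 * r = 0" unfolding pt_def by (rule pcl_lin_eq[OF lB])
    then show "r = r'" by simp
  qed
  have pbn: "pb \<notin> pt ` rts"
  proof
    assume "pb \<in> pt ` rts"
    then obtain r where "pt r = pb" by auto
    then have "1 * 1 - 0 * r = (0::'k)" unfolding pt_def pb_def by (rule pcl_lin_eq[OF lB])
    then show False by simp
  qed
  have "(\<Sum>L\<in>Z. ordQ F Q L) = (\<Sum>L\<in>pt ` rts \<union> {pb}. ordQ F Q L)"
    by (rule sum.mono_neutral_left[OF fin' ZZ zero])
  also have "\<dots> = (\<Sum>L\<in>pt ` rts. ordQ F Q L) + ordQ F Q pb"
    using pbn finr by (simp add: sum.union_disjoint)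
  also have "(\<Sum>L\<in>pt ` rts. ordQ F Q L) = (\<Sum>r\<in>rts. order r fp)"
    by (subst sum.reindex[OF inj]) (simp add: ordpt)
  also have "\<dots> = degree fp" unfolding rts_def by (rule sum_orders[OF ac]) (simp add: fp_def f)
  finally have "(\<Sum>L\<in>Z. ordQ F Q L) = n"
    using ordpb DEG[OF hom, of a b] by (simp add: fp_def)
  moreover have "finite Z" using ZZ fin' finite_subset by blast
  ultimately show ?thesis unfolding Z_def by blast
qed



lemma poly3_eqI: "(\<And>i j l. coeff3 F i j l = coeff3 G i j l) \<Longrightarrow> F = G"
  unfolding coeff3_def by (intro poly_eqI) blast

lemma poly3_nz: "F \<noteq> 0 \<Longrightarrow> \<exists>i j l. coeff3 F i j l \<noteq> 0"
  using poly3_eqI[of F 0] by (auto simp: coeff3_def)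

lemma curve_deg_eq:
  assumes h: "homogeneous F n" shows "curve_deg F = n"
proof -
  have "F \<noteq> 0" using h by (simp add: homogeneous_def)
  then obtain i j l where nz: "coeff3 F i j l \<noteq> 0" using poly3_nz by blast
  have u: "m = n" if "homogeneous F m" for m
    using homogeneousD[OF h nz] homogeneousD[OF that nz] by simp
  show ?thesis unfolding curve_deg_def by (rule the_equality[of "homogeneous F", OF h u])
qed

lemma sum3_delta:
  fixes B i j l :: nat
  shows "(\<Sum>i'<B. \<Sum>j'<B. \<Sum>l'<B. if i' = i \<and> j' = j \<and> l' = l then V else 0) =
    (if i < B \<and> j < B \<and> l < B then V else 0)"
proof -
  have 1: "(\<Sum>l'<B. if i' = i \<and> j' = j \<and> l' = l then V else 0) = (if i' = i \<and> j' = j \<and> l < B then V else 0)" for i' j'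
  proof -
    have "(\<Sum>l'<B. if i' = i \<and> j' = j \<and> l' = l then V else 0) = (\<Sum>l'<B. if l' = l then (if i' = i \<and> j' = j then V else 0) else 0)"
      by (intro sum.cong) auto
    also have "\<dots> = (if l \<in> {..<B} then (if i' = i \<and> j' = j then V else 0) else 0)" by (rule sum.delta) simp
    finally show ?thesis by auto
  qed
  have 2: "(\<Sum>j'<B. if i' = i \<and> j' = j \<and> l < B then V else 0) = (if i' = i \<and> j < B \<and> l < B then V else 0)" for i'
  proof -
    have "(\<Sum>j'<B. if i' = i \<and> j' = j \<and> l < B then V else 0) = (\<Sum>j'<B. if j' = j then (if i' = i \<and> l < B then V else 0) else 0)"
      by (intro sum.cong) auto
    also have "\<dots> = (if j \<in> {..<B} then (if i' = i \<and> l < B then V else 0) else 0)" by (rule sum.delta) simp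
    finally show ?thesis by auto
  qed
  have 3: "(\<Sum>i'<B. if i' = i \<and> j < B \<and> l < B then V else 0) = (if i < B \<and> j < B \<and> l < B then V else 0)"
  proof -
    have "(\<Sum>i'<B. if i' = i \<and> j < B \<and> l < B then V else 0) = (\<Sum>i'<B. if i' = i then (if j < B \<and> l < B then V else 0) else 0)"
      by (intro sum.cong) auto
    also have "\<dots> = (if i \<in> {..<B} then (if j < B \<and> l < B then V else 0) else 0)" by (rule sum.delta) simp
    finally show ?thesis by auto
  qed
  show ?thesis unfolding 1 2 3 ..
qed

definition C4 :: "'k::field \<Rightarrow> 'k poly3 poly" where
  "C4 c = monom (monom (monom (monom c 0) 0) 0) 0"

definition phi :: "'k::field poly3 \<Rightarrow> 'k poly3 poly" where
  "phi F = eval3 (map3 C4 F) (monom (monom 1 1) 1) (monom (monom (monom 1 1) 0) 1)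
      (monom (monom (monom (monom 1 1) 0) 0) 1)"

lemma rh_C4: "rh (C4 :: 'k::field \<Rightarrow> 'k poly3 poly)"
proof -
  have "(C4::'k \<Rightarrow> 'k poly3 poly) = (\<lambda>c. [:[:[:[:c:]:]:]:])" by (rule ext) (simp add: C4_def monom_0)
  moreover have "rh (\<lambda>c. [:[:[:[:c::'k:]:]:]:])"
    by (intro rh_comp[OF rh_const, where g="\<lambda>c. [:[:[:c:]:]:]"]
        rh_comp[OF rh_const, where g="\<lambda>c. [:[:c:]:]"] rh_comp[OF rh_const, where g="\<lambda>c. [:c:]"] rh_const)
  ultimately show ?thesis by simp
qed

lemma phi_mult: "phi (F * G) = phi F * phi G"
  unfolding phi_def rhD(3)[OF rh_map3[OF rh_C4]] eval3_mult ..

lemma C4_0: "C4 0 = 0" by (simp add: C4_def)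

lemma phi_term: "C4 c * monom (monom 1 1) 1 ^ i * monom (monom (monom 1 1) 0) 1 ^ j *
      monom (monom (monom (monom 1 1) 0) 0) 1 ^ l = monom (monom (monom (monom c l) j) i) (i + j + l)"
  by (simp add: C4_def monom_power mult_monom)

lemma coeff3_sum: "coeff3 (sum f S) i j l = (\<Sum>x\<in>S. coeff3 (f x) i j l)"
  by (simp add: coeff3_def coeff_sum)

lemma coeff3_monom: "coeff3 (monom (monom (monom c l) j) i) i' j' l' = (if i = i' \<and> j = j' \<and> l = l' then c else 0)"
  by (simp add: coeff3_def coeff_monom)

lemma coeff3_0: "coeff3 0 i j l = 0" by (simp add: coeff3_def)

lemma PHI_COEFF: "coeff3 (coeff (phi F) m) i j l = (if i + j + l = m then coeff3 F i j l else 0)"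
proof -
  obtain B where B: "bnd F B" using bnd_ex by blast
  have B': "bnd (map3 C4 F) B" by (rule bnd_map3[OF B]) (rule C4_0)
  have "coeff3 (coeff (phi F) m) i j l = (\<Sum>i'<B. \<Sum>j'<B. \<Sum>l'<B.
      (if i' = i \<and> j' = j \<and> l' = l then (if i + j + l = m then coeff3 F i j l else 0) else 0))"
    unfolding phi_def EV[OF B'] coeff3_map3[of C4, OF C4_0] phi_term coeff_sum coeff3_sum coeff_monom
    by (intro sum.cong refl) (auto simp: coeff3_monom coeff3_0)
  also have "\<dots> = (if i < B \<and> j < B \<and> l < B then (if i + j + l = m then coeff3 F i j l else 0) else 0)"
    by (rule sum3_delta)
  also have "\<dots> = (if i + j + l = m then coeff3 F i j l else 0)"
    using B unfolding bnd_def by auto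
  finally show ?thesis .
qed


lemma phi_hom:
  assumes "homogeneous F n" shows "phi F = monom F n"
proof (rule poly_eqI)
  fix m
  show "coeff (phi F) m = coeff (monom F n) m"
  proof (rule poly3_eqI)
    fix i j l
    show "coeff3 (coeff (phi F) m) i j l = coeff3 (coeff (monom F n) m) i j l"
      using homogeneousD[OF assms, of i j l] by (auto simp: PHI_COEFF coeff_monom coeff3_0)
  qed
qed

lemma phi_monom_hom:
  assumes "F \<noteq> 0" "phi F = monom c a"
  shows "homogeneous F a"
  unfolding homogeneous_def
proof (intro conjI allI impI)
  show "F \<noteq> 0" by fact
  fix i j l assume "coeff3 F i j l \<noteq> 0"
  moreover have "coeff3 F i j l = coeff3 (coeff (phi F) (i + j + l)) i j l" by (simp add: PHI_COEFF)
  ultimately show "i + j + l = a" using assms(2) by (auto simp: coeff_monom coeff3_def split: if_splits)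
qed

lemma factor_hom:
  fixes C :: "'k::field poly3"
  assumes hC: "homogeneous C N" and CG: "C = C1 * G"
  shows "homogeneous C1 (curve_deg C1) \<and> curve_deg C1 \<le> N"
proof -
  have C0: "C \<noteq> 0" using hC by (simp add: homogeneous_def)
  then have C10: "C1 \<noteq> 0" and G0: "G \<noteq> 0" using CG by auto
  define p where "p = phi C1"
  define g where "g = phi G"
  have pg: "p * g = monom C N" unfolding p_def g_def phi_mult[symmetric] CG[symmetric] by (rule phi_hom[OF hC])
  then have p0: "p \<noteq> 0" and g0: "g \<noteq> 0" using C0 by auto
  have "order 0 (p * g) = N" unfolding pg using C0 by simp
  then have o: "order 0 p + order 0 g = N" using order_mult[of p g 0] p0 g0 by simp
  have "degree (p * g) = N" unfolding pg by (simp add: degree_monom_eq C0)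
  then have d: "degree p + degree g = N" using degree_mult_eq[OF p0 g0] by simp
  have "order 0 p \<le> degree p" "order 0 g \<le> degree g" using order_degree p0 g0 by auto
  then have op: "order 0 p = degree p" using o d by linarith
  obtain h where h: "p = [:-0, 1:] ^ order 0 p * h" using order_1[of 0 p] by (elim dvdE)
  then have h0: "h \<noteq> 0" using p0 by auto
  have "degree p = order 0 p + degree h" using h h0 by (metis degree_linear_power degree_mult_eq power_not_zero pCons_eq_0_iff one_neq_zero)
  then have "degree h = 0" using op by simp
  then have "h = [:coeff h 0:]" by (rule degree_0_id[symmetric])
  then have "p = [:0, 1:] ^ order 0 p * [:coeff h 0:]" using h by simp
  then have "p = monom (coeff h 0) (order 0 p)" by (simp add: monom_altdef mult.commute[of _ "[:coeff h 0:]"])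
  then have hom1: "homogeneous C1 (order 0 p)" using phi_monom_hom[OF C10] unfolding p_def by blast
  then show ?thesis using curve_deg_eq[OF hom1] o by simp
qed



lemma two_points:
  fixes P Q L1 L2 :: "'k::field pt set"
  assumes "P \<in> P2" "Q \<in> P2" "P \<noteq> Q" "L1 \<in> P2" "L2 \<in> P2"
    "inc P L1" "inc Q L1" "inc P L2" "inc Q L2"
  shows "L1 = L2"
proof -
  have cr: "cross (rep P) (rep Q) \<noteq> z3"
    using pclass_neq_cross[OF P2_D(2)[OF assms(1)] P2_D(2)[OF assms(2)]] P2_D(3)[OF assms(1)] P2_D(3)[OF assms(2)] assms(3)
    by metis
  have "\<exists>c. rep L = vsc c (cross (rep P) (rep Q))" if "inc P L" "inc Q L" for L
    using that by (intro perp_cross cr) (simp_all add: inc_def dot_comm)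
  then obtain c1 c2 where c: "rep L1 = vsc c1 (cross (rep P) (rep Q))" "rep L2 = vsc c2 (cross (rep P) (rep Q))"
    using assms(6-9) by blast
  have "c1 \<noteq> 0" "c2 \<noteq> 0" using c P2_D(2)[OF assms(4)] P2_D(2)[OF assms(5)] by (auto simp: vsc_def)
  then have "pclass (rep L1) = pclass (rep L2)" using c by (simp add: pclass_vsc)
  then show ?thesis using P2_D(3)[OF assms(4)] P2_D(3)[OF assms(5)] by simp
qed

lemma rational_pclass:
  assumes "v \<noteq> z3" "inF S v" shows "rational S (pclass (v::'k::field pt))"
proof -
  obtain x y z where v: "v = (x, y, z)" by (cases v) auto
  show ?thesis unfolding rational_def
    using P2_I[OF assms(1)] self_pclass[of v] assms(2) unfolding v inF_def by auto
qed

lemma inF_lin: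
  assumes "subfield S" "inF S a" "inF S b" "x \<in> S" "y \<in> S"
  shows "inF S (lin x a y b)"
  using assms unfolding subfield_def inF_def lin_def vadd_def vsc_def by auto

lemma count_uni:
  fixes Fq :: "'k::field set"
  assumes sf: "subfield Fq" and finF: "finite Fq" and arc: "arc Fq K" and QK: "Q \<in> K"
    and lB: "lineB Q a b" and aF: "inF Fq a" and bF: "inF Fq b"
    and finU: "finite {L. unisecant Fq K L \<and> inc Q L}"
  shows "int (card Fq) + 1 - (int (card K) - 1) \<le> int (card {L. unisecant Fq K L \<and> inc Q L})"
proof -
  define U where "U = {L. unisecant Fq K L \<and> inc Q L}"
  define pt where "pt s = pclass (lin 1 a s b)" for s
  define pb where "pb = pclass (lin 0 a 1 b)"
  define S where "S = pt ` Fq \<union> {pb}"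
  have finK: "finite K" and ratK: "\<forall>P\<in>K. rational Fq P" using arc by (auto simp: arc_def)
  have KP2: "P \<in> P2" if "P \<in> K" for P using ratK that by (auto simp: rational_def)
  have inj: "inj_on pt Fq"
  proof
    fix r r' assume "pt r = pt r'"
    then have "1 * r' - 1 * r = 0" unfolding pt_def by (rule pcl_lin_eq[OF lB])
    then show "r = r'" by simp
  qed
  have pbn: "pb \<notin> pt ` Fq"
  proof
    assume "pb \<in> pt ` Fq"
    then obtain r where "pt r = pb" by auto
    then have "1 * 1 - 0 * r = (0::'k)" unfolding pt_def pb_def by (rule pcl_lin_eq[OF lB])
    then show False by simp
  qed
  have cardS: "card S = card Fq + 1"
    unfolding S_def using pbn finF by (simp add: card_image[OF inj])
  have finS: "finite S" unfolding S_def using finF by simp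
  have Sprops: "L \<in> P2 \<and> inc Q L \<and> rational Fq L" if "L \<in> S" for L
  proof -
    obtain x y where xy: "L = pclass (lin x a y b)" "x \<noteq> 0 \<or> y \<noteq> 0" "x \<in> Fq" "y \<in> Fq"
      using \<open>L \<in> S\<close> sf unfolding S_def pt_def pb_def subfield_def by auto
    show ?thesis unfolding xy(1)
      using line_pt[OF lB xy(2)] rational_pclass[OF lineB_nz[OF lB xy(2)] inF_lin[OF sf aF bF xy(3,4)]] by blast
  qed
  have other: "\<exists>P. P \<in> K \<and> P \<noteq> Q \<and> inc P L" if "L \<in> S - U" for L
  proof (rule ccontr)
    assume no: "\<not> (\<exists>P. P \<in> K \<and> P \<noteq> Q \<and> inc P L)"
    have "L \<in> S" "L \<notin> U" using that by auto
    then have r: "rational Fq L" "inc Q L" using Sprops by auto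
    have "{P \<in> K. inc P L} = {Q}" using no QK r(2) by auto
    then have "unisecant Fq K L" using r(1) by (simp add: unisecant_def)
    then show False using \<open>L \<notin> U\<close> r(2) by (simp add: U_def)
  qed
  define h where "h L = (SOME P. P \<in> K \<and> P \<noteq> Q \<and> inc P L)" for L
  have hP: "h L \<in> K \<and> h L \<noteq> Q \<and> inc (h L) L" if "L \<in> S - U" for L
    unfolding h_def using someI_ex[OF other[OF that]] .
  have injh: "inj_on h (S - U)"
  proof
    fix L1 L2 assume L: "L1 \<in> S - U" "L2 \<in> S - U" and eq: "h L1 = h L2"
    show "L1 = L2"
    proof (rule two_points[of "h L1" Q])
      show "h L1 \<in> P2" using KP2 hP[OF L(1)] by blast
      show "Q \<in> P2" using KP2 QK by blast
      show "h L1 \<noteq> Q" using hP[OF L(1)] by blast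
      show "L1 \<in> P2" "L2 \<in> P2" "inc Q L1" "inc Q L2" using Sprops L by auto
      show "inc (h L1) L1" using hP[OF L(1)] by blast
      show "inc (h L1) L2" using hP[OF L(2)] eq by simp
    qed
  qed
  have "card (S - U) \<le> card (K - {Q})"
    by (rule card_inj_on_le[OF injh]) (use hP finK in auto)
  also have "\<dots> = card K - 1" using QK finK by simp
  finally have c1: "card (S - U) \<le> card K - 1" .
  have "card S = card (S \<inter> U) + card (S - U)" using finS by (metis card_Int_Diff)
  moreover have "card (S \<inter> U) \<le> card U" using finU unfolding U_def by (intro card_mono) auto
  ultimately have "card Fq + 1 \<le> card U + (card K - 1)" using cardS c1 by linarith
  moreover have "card K \<ge> 1" using QK finK by (metis One_nat_def card_gt_0_iff empty_iff less_eq_Suc_le)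
  ultimately show ?thesis unfolding U_def by linarith
qed

lemma infl_ord:
  fixes F :: "'k::field poly3"
  assumes inf: "infinite (UNIV::'k set)" and hom: "homogeneous F n" and lB: "lineB Q a b"
    and QP2: "Q \<in> P2" and L: "L \<in> P2" "inc Q L"
    and nz: "restr F (rep L) (rep (Rsel Q L)) \<noteq> 0" and le2: "ordQ F Q L \<le> 2"
    and ns: "nonsingular F L" and infl: "inflexion F L"
  shows "ordQ F Q L \<le> 1"
proof (rule ccontr)
  assume "\<not> ordQ F Q L \<le> 1"
  then have o2: "ordQ F Q L = 2" using le2 by simp
  define v where "v = rep L"
  define R where "R = Rsel Q L"
  define w where "w = rep R"
  have R: "R \<in> P2" "R \<noteq> L" "inc R Q" using Rsel_props[OF lB L(1)] unfolding R_def by auto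
  have "monom 1 2 dvd restr F v w" using nz o2 unfolding v_def w_def R_def ordQ_def
    by (simp add: monom_1_dvd_iff)
  then have "coeff (restr F v w) 1 = 0" by (simp add: monom_1_dvd_iff')
  then have g1: "dot (gradient F v) w = 0" by (simp only: GRAD)
  have "evalp F v = 0" using ns unfolding nonsingular_def on_curve_def v_def by simp
  then have g2: "dot (gradient F v) v = 0" by (rule EULER[OF inf hom])
  have cr: "cross v w \<noteq> z3"
    using pclass_neq_cross[OF P2_D(2)[OF L(1)] P2_D(2)[OF R(1)]] P2_D(3)[OF L(1)] P2_D(3)[OF R(1)] R(2)
    unfolding v_def w_def by metis
  obtain c1 where c1: "gradient F v = vsc c1 (cross v w)" using perp_cross[OF _ _ cr] g1 g2 dot_comm by metis
  have q1: "dot (rep Q) v = 0" "dot (rep Q) w = 0" using L(2) R(3) unfolding v_def w_def inc_def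
    by (simp_all add: dot_comm)
  obtain c2 where c2: "rep Q = vsc c2 (cross v w)" using perp_cross[OF q1 cr] by blast
  have "c2 \<noteq> 0" using P2_D(2)[OF QP2] c2 by (auto simp: vsc_def)
  have "c1 \<noteq> 0" using ns c1 unfolding nonsingular_def v_def by (auto simp: vsc_def)
  have "gradient F v = vsc (c1 / c2) (rep Q)" using c1 c2 \<open>c2 \<noteq> 0\<close> by (simp add: vsc_vsc)
  then have "tangent F L = Q" unfolding tangent_def v_def[symmetric]
    using \<open>c1 \<noteq> 0\<close> \<open>c2 \<noteq> 0\<close> P2_D(3)[OF QP2] by (simp add: pclass_vsc)
  then have "imult F L Q > 2" using infl unfolding inflexion_def by simp
  moreover have "imult F L Q = 2" unfolding imult_alt using nz o2 by (simp add: numeral_eq_enat)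
  ultimately show False by simp
qed



theorem lemma2p4:
  fixes Fq :: "'k::field_gcd set" and K :: "'k pt set set" and C1 :: "'k poly3"
    and Q :: "'k pt set" and q d :: nat
  assumes "alg_closed TYPE('k)"
    and "subfield Fq" and "finite Fq" and "card Fq = q" and "odd q"
    and "arc Fq K"
    and "irreducible_envelope Fq K C1"
    and "d = curve_deg C1"
    and "Q \<in> K"
  shows "let A = {L. unisecant Fq K L \<and> inc Q L \<and> on_curve C1 L};
             u = card A;
             v = card {L \<in> A. nonsingular C1 L \<and> inflexion C1 L}
         in 2 * (u - v) + v \<ge> d"
proof -
  note ac = assms(1) and sf = assms(2) and finF = assms(3) and arc = assms(6) and QK = assms(9)
  have inf: "infinite (UNIV::'k set)" by (rule alg_closed_infinite[OF ac])
  obtain C where env: "envelope Fq K C" and dvd: "C1 dvd C"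
    using assms(7) unfolding irreducible_envelope_def by blast
  from dvd obtain G where CG: "C = C1 * G" by (elim dvdE)
  define N where "N = curve_deg C"
  have homC: "homogeneous C N" and degC: "int N = 2 * (int (card Fq) - int (card K) + 2)"
    and uniC: "\<And>L. unisecant Fq K L \<Longrightarrow> on_curve C L"
    and im2: "\<And>P L. P \<in> K \<Longrightarrow> unisecant Fq K L \<Longrightarrow> inc P L \<Longrightarrow> imult C L P = 2"
    using env unfolding envelope_def N_def by auto
  have hom1: "homogeneous C1 d" and dN: "d \<le> N" using factor_hom[OF homC CG] assms(8) by auto
  have Qrat: "rational Fq Q" using arc QK by (simp add: arc_def)
  then obtain q0 where q0: "q0 \<in> Q" "inF Fq q0" and QP2: "Q \<in> P2"
    unfolding rational_def inF_def by auto
  have q0nz: "q0 \<noteq> z3" and Qeq: "Q = pclass q0" using P2_mem_eq[OF QP2 q0(1)] by auto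
  obtain cQ where cQ: "cQ \<noteq> 0" "rep Q = vsc cQ q0" using P2_D(1)[OF QP2] Qeq by (metis mem_pclass)
  obtain a b where ab: "dot q0 a = 0" "dot q0 b = 0" "\<forall>u. dot q0 u = 0 \<longrightarrow> (\<exists>x y. u = lin x a y b)"
     "\<forall>x y. lin x a y b = z3 \<longrightarrow> x = 0 \<and> y = 0" "inF Fq a" "inF Fq b"
    using basis_ex[OF q0nz] sf q0(2) by blast
  have lB: "lineB Q a b"
    unfolding lineB_def
  proof (intro conjI allI)
    fix u
    have "dot (rep Q) u = cQ * dot q0 u" by (simp add: cQ dot_vsc_l)
    moreover have "dot q0 (lin x a y b) = 0" for x y by (simp add: lin_def dot_vadd_r dot_vsc_r ab)
    ultimately show "dot (rep Q) u = 0 \<longleftrightarrow> (\<exists>x y. u = lin x a y b)"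
    proof -
      assume e: "dot (rep Q) u = cQ * dot q0 u" and l: "\<And>x y. dot q0 (lin x a y b) = 0"
      have "dot (rep Q) u = 0 \<longleftrightarrow> dot q0 u = 0" using e cQ(1) by simp
      then show ?thesis using ab(3) l by blast
    qed
  qed (use ab(4) in blast)
  define U where "U = {L. unisecant Fq K L \<and> inc Q L}"
  define A where "A = {L. unisecant Fq K L \<and> inc Q L \<and> on_curve C1 L}"
  define Ainf where "Ainf = {L \<in> A. nonsingular C1 L \<and> inflexion C1 L}"
  have UP2: "L \<in> P2" if "unisecant Fq K L" for L using that by (simp add: unisecant_def rational_def)
  have goal: "2 * (card A - card Ainf) + card Ainf \<ge> d"
  proof (cases "U = {}")
    case True
    have "int (card Fq) + 1 - (int (card K) - 1) \<le> int (card U)"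
      unfolding U_def by (rule count_uni[OF sf finF arc QK lB ab(5,6)]) (simp only: True[unfolded U_def] finite.emptyI)
    then have "N = 0" using True degC by simp
    then show ?thesis using dN by simp
  next
    case False
    then obtain L0 where L0: "unisecant Fq K L0" "inc Q L0" unfolding U_def by blast
    have L0P2: "L0 \<in> P2" using UP2 L0(1) .
    have nz0: "restr C (rep L0) (rep (Rsel Q L0)) \<noteq> 0"
      using im2[OF QK L0] unfolding imult_alt by (auto split: if_splits)
    have fC: "restr C a b \<noteq> 0"
    proof
      assume f0: "restr C a b = 0"
      obtain x1 y1 where xy1: "rep L0 = lin x1 a y1 b" using on_line_coords[OF lB L0P2 L0(2)] by blast
      have R: "Rsel Q L0 \<in> P2" "Rsel Q L0 \<noteq> L0" "inc Q (Rsel Q L0)"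
        using Rsel_props[OF lB L0P2] inc_sym by auto
      obtain x2 y2 where xy2: "rep (Rsel Q L0) = lin x2 a y2 b" using on_line_coords[OF lB R(1,3)] by blast
      have "x1 * y2 - x2 * y1 \<noteq> 0" using det_nz[OF lB L0P2 R(1) R(2)[symmetric] xy1 xy2] .
      then have "x1 \<noteq> 0 \<or> x2 \<noteq> 0" by auto
      then have "restr C (rep L0) (rep (Rsel Q L0)) = 0"
        unfolding xy1 xy2 lin_def by (rule CL0[OF inf homC f0])
      with nz0 show False by simp
    qed
    define ZC where "ZC = {L \<in> P2. inc Q L \<and> on_curve C L}"
    have BC: "finite ZC" "(\<Sum>L\<in>ZC. ordQ C Q L) = N"
      using BEZOUT[OF ac homC lB fC] unfolding ZC_def by auto
    have UZ: "U \<subseteq> ZC" unfolding U_def ZC_def using UP2 uniC by auto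
    have finU: "finite U" using finite_subset[OF UZ BC(1)] .
    have cnt: "int (card Fq) + 1 - (int (card K) - 1) \<le> int (card U)"
      unfolding U_def by (rule count_uni[OF sf finF arc QK lB ab(5,6)]) (use finU U_def in simp)
    have nzL: "restr F (rep L) (rep (Rsel Q L)) \<noteq> 0 \<and> ordQ F Q L \<noteq> 0"
      if hh: "homogeneous F n" "restr F a b \<noteq> 0" "L \<in> P2" "inc Q L" "on_curve F L" for F n L
    proof -
      obtain x y where "rep L = lin x a y b" using on_line_coords[OF lB hh(3,4)] by blast
      then have "restr F (rep L) (rep (Rsel Q L)) \<noteq> 0" using ordQ_formula[OF inf hh(1) lB hh(2-4)] by blast
      then show ?thesis using oncurve_iff[OF hh(3)] hh(5) unfolding ordQ_def by blast
    qed
    have ordU: "ordQ C Q L = 2 \<and> restr C (rep L) (rep (Rsel Q L)) \<noteq> 0" if "L \<in> U" for L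
      using im2[OF QK, of L] that unfolding U_def imult_alt by (auto split: if_splits simp: numeral_eq_enat)
    have "(\<Sum>L\<in>ZC. ordQ C Q L) = (\<Sum>L\<in>U. ordQ C Q L) + (\<Sum>L\<in>ZC - U. ordQ C Q L)"
      using BC(1) UZ by (metis sum.subset_diff add.commute)
    also have "(\<Sum>L\<in>U. ordQ C Q L) = 2 * card U" using ordU by simp
    finally have "2 * card U + (\<Sum>L\<in>ZC - U. ordQ C Q L) = N" using BC(2) by simp
    moreover have "2 * int (card U) \<ge> int N" using cnt degC by presburger
    ultimately have s0: "(\<Sum>L\<in>ZC - U. ordQ C Q L) = 0" by linarith
    have ZCU: "ZC \<subseteq> U"
    proof
      fix L assume "L \<in> ZC"
      show "L \<in> U"
      proof (rule ccontr)
        assume "L \<notin> U"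
        then have "ordQ C Q L = 0" using s0 BC(1) \<open>L \<in> ZC\<close> by simp
        moreover have "ordQ C Q L \<noteq> 0" using nzL[OF homC fC] \<open>L \<in> ZC\<close> unfolding ZC_def by blast
        ultimately show False by simp
      qed
    qed
    have fC1: "restr C1 a b \<noteq> 0" using fC unfolding CG restr_mult by auto
    define Z1 where "Z1 = {L \<in> P2. inc Q L \<and> on_curve C1 L}"
    have B1: "finite Z1" "(\<Sum>L\<in>Z1. ordQ C1 Q L) = d"
      using BEZOUT[OF ac hom1 lB fC1] unfolding Z1_def by auto
    have Z1A: "Z1 = A"
    proof
      show "A \<subseteq> Z1" unfolding A_def Z1_def using UP2 by auto
      show "Z1 \<subseteq> A"
      proof
        fix L assume "L \<in> Z1"
        then have "L \<in> ZC" unfolding Z1_def ZC_def on_curve_def CG by (simp add: evalp_mult)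
        then have "L \<in> U" using ZCU by blast
        then show "L \<in> A" using \<open>L \<in> Z1\<close> unfolding U_def A_def Z1_def by simp
      qed
    qed
    have le2: "ordQ C1 Q L \<le> 2" if "L \<in> A" for L
    proof -
      have LU: "L \<in> U" using that unfolding A_def U_def by simp
      have "restr C (rep L) (rep (Rsel Q L)) = restr C1 (rep L) (rep (Rsel Q L)) * restr G (rep L) (rep (Rsel Q L))"
        unfolding CG restr_mult ..
      then have "ordQ C Q L = ordQ C1 Q L + ordQ G Q L"
        using ordU[OF LU] unfolding ordQ_def by (metis order_mult)
      then show ?thesis using ordU[OF LU] by simp
    qed
    have le1: "ordQ C1 Q L \<le> 1" if "L \<in> Ainf" for L
    proof -
      have LA: "L \<in> A" using that unfolding Ainf_def by simp
      then have L: "L \<in> P2" "inc Q L" "on_curve C1 L" unfolding A_def using UP2 by auto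
      show ?thesis
        using infl_ord[OF inf hom1 lB QP2 L(1,2) conjunct1[OF nzL[OF hom1 fC1 L]] le2[OF LA]] that
        unfolding Ainf_def by auto
    qed
    have finA: "finite A" using B1(1) Z1A by simp
    have AinfA: "Ainf \<subseteq> A" unfolding Ainf_def by auto
    have "d = (\<Sum>L\<in>A. ordQ C1 Q L)" using B1(2) Z1A by simp
    also have "\<dots> \<le> (\<Sum>L\<in>A. if L \<in> Ainf then 1 else 2)"
      by (rule sum_mono) (use le1 le2 in auto)
    also have "\<dots> = card Ainf + 2 * card (A - Ainf)"
    proof -
      have "(\<Sum>L\<in>A. if L \<in> Ainf then 1 else (2::nat)) = (\<Sum>L\<in>Ainf. 1) + (\<Sum>L\<in>A - Ainf. 2)"
        using finA AinfA by (simp add: sum.If_cases Int_absorb1 Diff_eq)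
      then show ?thesis by simp
    qed
    also have "card (A - Ainf) = card A - card Ainf" using finA AinfA by (simp add: card_Diff_subset finite_subset)
    finally show ?thesis by simp
  qed
  then show ?thesis unfolding Let_def A_def Ainf_def by simp
qed


end
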